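(* Let $G$ be a finite (unsigned) graph. Write its chromatic symmetric function $X_G$ as a polynomial with rational coefficients in $\{\zeta_n : n\ge1\}$. Then for every $k\ge 0$, the number of acyclic orientations of $G$ with exactly $k$ sinks equals the sum of the coefficients of those monomials for which the sum of the indices $n$ of its $\zeta_n$ factors (counted with multiplicity) equals $k$.
   Context: For a finite graph $G$ with vertices $v_1,\dots,v_n$, a proper coloring is a map $\kappa:V(G)\to\{1,2,3,\dots\}$ with $\kappa(u)\ne\kappa(v)$ whenever $u,v$ are joined by an edge, and $X_G=\sum_{\kappa\text{ proper}}x_{\kappa(v_1)}\cdots x_{\kappa(v_n)}$ in commuting variables $x_1,x_2,\dots$. A sink of an orientation is a vertex with no outgoing edges. Notation: $p_a=\sum_{i\ge1}x_i^a$ and $\zeta_n=\sum_{a=1}^n\binom{n}{a}p_a$ for $n\ge1$ (equivalently $p_n=\sum_{i=1}^n\binom{n}{i}(-1)^{n-i}\zeta_i$). *)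

theory Defs
  imports Complex_Main "HOL-Library.Poly_Mapping" "HOL-Library.Multiset" "HOL-Library.FuncSet"
begin

text \<open>Formal power series in the commuting variables x_1, x_2, ... (indexed by positive
naturals) with rational coefficients, represented by their coefficient functions on
monomials (finitely supported exponent maps nat =>0 nat).\<close>

type_synonym fps_inf = "(nat \<Rightarrow>\<^sub>0 nat) \<Rightarrow> rat"

definition fpsi_one :: fps_inf where
  "fpsi_one \<alpha> = (if \<alpha> = 0 then 1 else 0)"

definition fpsi_mult :: "fps_inf \<Rightarrow> fps_inf \<Rightarrow> fps_inf" where
  "fpsi_mult f g \<alpha> = (\<Sum>(\<beta>,\<gamma>)\<in>{(\<beta>,\<gamma>). \<beta> + \<gamma> = \<alpha>}. f \<beta> * g \<gamma>)"

definition psum :: "nat \<Rightarrow> fps_inf" where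
  "psum a \<alpha> = (if \<exists>i\<ge>1. \<alpha> = Poly_Mapping.single i a then 1 else 0)"

definition zeta :: "nat \<Rightarrow> fps_inf" where
  "zeta n \<alpha> = (\<Sum>a=1..n. of_nat (n choose a) * psum a \<alpha>)"

definition zeta_mono :: "nat multiset \<Rightarrow> fps_inf" where
  "zeta_mono lam = foldr (\<lambda>n acc. fpsi_mult (zeta n) acc) (sorted_list_of_multiset lam) fpsi_one"

definition simple_graph :: "'v set \<Rightarrow> 'v set set \<Rightarrow> bool" where
  "simple_graph V E \<longleftrightarrow> finite V \<and> (\<forall>e\<in>E. e \<subseteq> V \<and> card e = 2)"

definition proper_coloring :: "'v set \<Rightarrow> 'v set set \<Rightarrow> ('v \<Rightarrow> nat) \<Rightarrow> bool" where
  "proper_coloring V E \<kappa> \<longleftrightarrow> \<kappa> \<in> V \<rightarrow>\<^sub>E {1..} \<and>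
     (\<forall>u v. {u, v} \<in> E \<longrightarrow> \<kappa> u \<noteq> \<kappa> v)"

definition chromatic_sym :: "'v set \<Rightarrow> 'v set set \<Rightarrow> fps_inf" where
  "chromatic_sym V E \<alpha> = of_nat (card {\<kappa>. proper_coloring V E \<kappa> \<and>
       (\<forall>i. Poly_Mapping.lookup \<alpha> i = card {v\<in>V. \<kappa> v = i})})"

text \<open>Orientations: D contains (u,v) meaning the edge {u,v} is directed u -> v.\<close>
definition orientation :: "'v set set \<Rightarrow> ('v \<times> 'v) set \<Rightarrow> bool" where
  "orientation E D \<longleftrightarrow> D \<subseteq> {(u, v). {u, v} \<in> E} \<and>
     (\<forall>u v. {u, v} \<in> E \<longrightarrow> ((u, v) \<in> D \<longleftrightarrow> (v, u) \<notin> D))"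

definition sinks :: "'v set \<Rightarrow> ('v \<times> 'v) set \<Rightarrow> 'v set" where
  "sinks V D = {v\<in>V. \<forall>w. (v, w) \<notin> D}"

definition acyc_orient_sinks :: "'v set \<Rightarrow> 'v set set \<Rightarrow> nat \<Rightarrow> nat" where
  "acyc_orient_sinks V E k = card {D. orientation E D \<and> acyclic D \<and> card (sinks V D) = k}"

text \<open>A polynomial in the zeta_n (n >= 1) with rational coefficients: a finitely supported
coefficient function on multisets of positive integers (the monomials).\<close>
definition zeta_poly :: "(nat multiset \<Rightarrow> rat) \<Rightarrow> bool" where
  "zeta_poly c \<longleftrightarrow> finite {lam. c lam \<noteq> 0} \<and> (\<forall>lam. c lam \<noteq> 0 \<longrightarrow> 0 \<notin># lam)"

definition zeta_eval :: "(nat multiset \<Rightarrow> rat) \<Rightarrow> fps_inf" where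
  "zeta_eval c \<alpha> = (\<Sum>lam\<in>{lam. c lam \<noteq> 0}. c lam * zeta_mono lam \<alpha>)"

end

theory Submission
  imports Defs "HOL-Computational_Algebra.Polynomial"
begin


type_synonym R = "(nat \<Rightarrow>\<^sub>0 nat) \<Rightarrow>\<^sub>0 rat"

definition Xv :: "nat \<Rightarrow> R" where
  "Xv i = Poly_Mapping.single (Poly_Mapping.single i 1) 1"

definition mv :: "(nat \<Rightarrow> rat) \<Rightarrow> (nat \<Rightarrow>\<^sub>0 nat) \<Rightarrow> rat" where
  "mv a \<alpha> = (\<Prod>i\<in>Poly_Mapping.keys \<alpha>. a i ^ Poly_Mapping.lookup \<alpha> i)"

definition ev :: "(nat \<Rightarrow> rat) \<Rightarrow> R \<Rightarrow> rat" where
  "ev a F = (\<Sum>\<alpha>\<in>Poly_Mapping.keys F. Poly_Mapping.lookup F \<alpha> * mv a \<alpha>)"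

lemma mv_superset:
  assumes "finite A" "Poly_Mapping.keys \<alpha> \<subseteq> A"
  shows "mv a \<alpha> = (\<Prod>i\<in>A. a i ^ Poly_Mapping.lookup \<alpha> i)"
  unfolding mv_def
  by (rule prod.mono_neutral_left) (use assms in \<open>auto simp: in_keys_iff\<close>)

lemma keys_add_nat: "Poly_Mapping.keys (\<alpha> + \<beta> :: nat \<Rightarrow>\<^sub>0 nat) = Poly_Mapping.keys \<alpha> \<union> Poly_Mapping.keys \<beta>"
  by (auto simp: in_keys_iff lookup_add)

lemma mv_add: "mv a (\<alpha> + \<beta>) = mv a \<alpha> * mv a \<beta>"
proof -
  let ?A = "Poly_Mapping.keys \<alpha> \<union> Poly_Mapping.keys \<beta>"
  have "mv a (\<alpha> + \<beta>) = (\<Prod>i\<in>?A. a i ^ Poly_Mapping.lookup (\<alpha>+\<beta>) i)"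
    by (rule mv_superset) (auto simp: keys_add_nat)
  also have "\<dots> = (\<Prod>i\<in>?A. a i ^ Poly_Mapping.lookup \<alpha> i) * (\<Prod>i\<in>?A. a i ^ Poly_Mapping.lookup \<beta> i)"
    by (simp add: lookup_add power_add prod.distrib)
  also have "\<dots> = mv a \<alpha> * mv a \<beta>"
    by (subst (1 2) mv_superset[of ?A]) auto
  finally show ?thesis .
qed

lemma mv_zero [simp]: "mv a 0 = 1"
  by (simp add: mv_def)

lemma ev_superset:
  assumes "finite A" "Poly_Mapping.keys F \<subseteq> A"
  shows "ev a F = (\<Sum>\<alpha>\<in>A. Poly_Mapping.lookup F \<alpha> * mv a \<alpha>)"
  unfolding ev_def
  by (rule sum.mono_neutral_left) (use assms in \<open>auto simp: in_keys_iff\<close>)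

lemma ev_add: "ev a (F + G) = ev a F + ev a G"
proof -
  let ?A = "Poly_Mapping.keys F \<union> Poly_Mapping.keys G"
  have "ev a (F + G) = (\<Sum>\<alpha>\<in>?A. Poly_Mapping.lookup (F+G) \<alpha> * mv a \<alpha>)"
    by (rule ev_superset) (use keys_add[of F G] in auto)
  also have "\<dots> = (\<Sum>\<alpha>\<in>?A. Poly_Mapping.lookup F \<alpha> * mv a \<alpha>) + (\<Sum>\<alpha>\<in>?A. Poly_Mapping.lookup G \<alpha> * mv a \<alpha>)"
    by (simp add: lookup_add algebra_simps sum.distrib)
  also have "\<dots> = ev a F + ev a G"
    by (subst (1 2) ev_superset[of ?A]) auto
  finally show ?thesis .
qed

lemma ev_zero [simp]: "ev a 0 = 0"
  by (simp add: ev_def)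

lemma ev_uminus: "ev a (- F) = - ev a F"
  by (simp add: ev_def sum_negf keys.rep_eq)

lemma ev_diff: "ev a (F - G) = ev a F - ev a G"
  using ev_add[of a F "-G"] ev_uminus[of a G] by simp

lemma ev_sum: "ev a (\<Sum>i\<in>I. F i) = (\<Sum>i\<in>I. ev a (F i))"
  by (induction I rule: infinite_finite_induct) (auto simp: ev_add)

lemma ev_single: "ev a (Poly_Mapping.single \<alpha> c) = c * mv a \<alpha>"
  by (simp add: ev_def)

lemma poly_expand: "F = (\<Sum>\<alpha>\<in>Poly_Mapping.keys F. Poly_Mapping.single \<alpha> (Poly_Mapping.lookup F \<alpha>))"
  by (rule poly_mapping_eqI)
     (auto simp: lookup_sum lookup_single when_def in_keys_iff sum.delta' intro!: sym[of _ "Poly_Mapping.lookup F _"])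

lemma ev_mult: "ev a (F * G) = ev a F * ev a G"
proof -
  let ?KF = "Poly_Mapping.keys F" and ?KG = "Poly_Mapping.keys G"
  have "F * G = (\<Sum>\<alpha>\<in>?KF. Poly_Mapping.single \<alpha> (Poly_Mapping.lookup F \<alpha>)) *
                (\<Sum>\<beta>\<in>?KG. Poly_Mapping.single \<beta> (Poly_Mapping.lookup G \<beta>))"
    by (subst (1) poly_expand, subst (1) poly_expand[of G]) simp
  also have "\<dots> = (\<Sum>\<alpha>\<in>?KF. \<Sum>\<beta>\<in>?KG. Poly_Mapping.single (\<alpha> + \<beta>) (Poly_Mapping.lookup F \<alpha> * Poly_Mapping.lookup G \<beta>))"
    by (simp add: sum_product mult_single)
  finally have "ev a (F * G) = (\<Sum>\<alpha>\<in>?KF. \<Sum>\<beta>\<in>?KG. Poly_Mapping.lookup F \<alpha> * Poly_Mapping.lookup G \<beta> * (mv a \<alpha> * mv a \<beta>))"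
    by (simp add: ev_sum ev_single mv_add)
  also have "\<dots> = ev a F * ev a G"
    by (simp add: ev_def sum_product algebra_simps)
  finally show ?thesis .
qed

lemma ev_one [simp]: "ev a 1 = 1"
  using ev_single[of a 0 1] by simp

lemma ev_scal [simp]: "ev a (Poly_Mapping.single 0 r) = r"
  by (simp add: ev_single)

lemma ev_Xv [simp]: "ev a (Xv i) = a i"
  by (simp add: Xv_def ev_single mv_def)

lemma ev_power: "ev a (F ^ n) = ev a F ^ n"
  by (induction n) (auto simp: ev_mult)

lemma ev_prod: "ev a (\<Prod>i\<in>I. F i) = (\<Prod>i\<in>I. ev a (F i))"
  by (induction I rule: infinite_finite_induct) (auto simp: ev_mult)

lemma ev_prod_mset: "ev a (prod_mset (image_mset F M)) = prod_mset (image_mset (\<lambda>x. ev a (F x)) M)"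
  by (induction M) (auto simp: ev_mult)

lemma ev_of_nat [simp]: "ev a (of_nat n) = of_nat n"
  by (induction n) (auto simp: ev_add)


definition agree :: "nat \<Rightarrow> R \<Rightarrow> fps_inf \<Rightarrow> bool" where
  "agree N F f \<longleftrightarrow> (\<forall>\<alpha>. Poly_Mapping.keys \<alpha> \<subseteq> {..N} \<longrightarrow> Poly_Mapping.lookup F \<alpha> = f \<alpha>)"

lemma finite_le_pm: "finite {\<beta>::nat\<Rightarrow>\<^sub>0nat. \<forall>i. Poly_Mapping.lookup \<beta> i \<le> Poly_Mapping.lookup \<alpha> i}"
proof -
  let ?B = "{\<beta>::nat\<Rightarrow>\<^sub>0nat. \<forall>i. Poly_Mapping.lookup \<beta> i \<le> Poly_Mapping.lookup \<alpha> i}"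
  let ?K = "Poly_Mapping.keys \<alpha>"
  let ?f = "\<lambda>\<beta>. restrict (Poly_Mapping.lookup \<beta>) ?K"
  have "inj_on ?f ?B"
  proof (rule inj_onI)
    fix x y assume x: "x \<in> ?B" and y: "y \<in> ?B" and eq: "?f x = ?f y"
    show "x = y"
    proof (rule poly_mapping_eqI)
      fix i show "Poly_Mapping.lookup x i = Poly_Mapping.lookup y i"
      proof (cases "i \<in> ?K")
        case True thus ?thesis using fun_cong[OF eq, of i] by simp
      next
        case False
        hence "Poly_Mapping.lookup \<alpha> i = 0" by (simp add: in_keys_iff)
        thus ?thesis using x y by (metis (mono_tags, lifting) le_zero_eq mem_Collect_eq)
      qed
    qed
  qed
  moreover have "?f ` ?B \<subseteq> PiE ?K (\<lambda>i. {..Poly_Mapping.lookup \<alpha> i})" by auto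
  moreover have "finite (PiE ?K (\<lambda>i. {..Poly_Mapping.lookup \<alpha> i}))" by (rule finite_PiE) auto
  ultimately show ?thesis by (meson finite_imageD finite_subset)
qed

lemma finite_decomp: "finite {(\<beta>,\<gamma>). \<beta> + \<gamma> = (\<alpha>::nat\<Rightarrow>\<^sub>0nat)}"
proof -
  let ?B = "{\<beta>::nat\<Rightarrow>\<^sub>0nat. \<forall>i. Poly_Mapping.lookup \<beta> i \<le> Poly_Mapping.lookup \<alpha> i}"
  have "{(\<beta>,\<gamma>). \<beta> + \<gamma> = \<alpha>} \<subseteq> ?B \<times> ?B" by (auto simp: lookup_add)
  thus ?thesis using finite_le_pm by (meson finite_SigmaI finite_subset)
qed

lemma agree_mult:
  assumes "agree N F f" "agree N G g"
  shows "agree N (F * G) (fpsi_mult f g)"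
  unfolding agree_def
proof (intro allI impI)
  fix \<alpha> :: "nat \<Rightarrow>\<^sub>0 nat" assume K: "Poly_Mapping.keys \<alpha> \<subseteq> {..N}"
  let ?D = "{(\<beta>,\<gamma>). \<beta> + \<gamma> = \<alpha>}"
  have "Poly_Mapping.lookup (F * G) \<alpha> = prod_fun (Poly_Mapping.lookup F) (Poly_Mapping.lookup G) \<alpha>"
    by (simp add: times_poly_mapping.rep_eq)
  also have "\<dots> = (\<Sum>(a, b). Poly_Mapping.lookup F a * Poly_Mapping.lookup G b when \<alpha> = a + b)"
    by (rule prod_fun_unfold_prod) auto
  also have "\<dots> = (\<Sum>(a, b)\<in>?D. Poly_Mapping.lookup F a * Poly_Mapping.lookup G b when \<alpha> = a + b)"
    by (rule Sum_any.expand_superset) (use finite_decomp in auto)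
  also have "\<dots> = (\<Sum>(a, b)\<in>?D. f a * g b)"
  proof (rule sum.cong)
    fix x assume "x \<in> ?D"
    then obtain a b where x: "x = (a,b)" "a + b = \<alpha>" by auto
    hence "Poly_Mapping.keys a \<subseteq> {..N}" "Poly_Mapping.keys b \<subseteq> {..N}" using K keys_add_nat by auto
    thus "(case x of (a, b) \<Rightarrow> Poly_Mapping.lookup F a * Poly_Mapping.lookup G b when \<alpha> = a + b) =
          (case x of (a, b) \<Rightarrow> f a * g b)"
      using assms x unfolding agree_def by auto
  qed simp
  also have "\<dots> = fpsi_mult f g \<alpha>" by (simp add: fpsi_mult_def)
  finally show "Poly_Mapping.lookup (F * G) \<alpha> = fpsi_mult f g \<alpha>" .
qed

lemma agree_one: "agree N 1 fpsi_one"
  by (auto simp: agree_def fpsi_one_def lookup_one)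

lemma lookup_scal: "Poly_Mapping.lookup (Poly_Mapping.single 0 r * F) \<alpha> = r * Poly_Mapping.lookup F \<alpha>"
  by (simp flip: mult_map_scale_conv_mult add: map.rep_eq when_def)

lemma agree_lin:
  assumes "\<And>i. i \<in> I \<Longrightarrow> agree N (F i) (f i)"
  shows "agree N (\<Sum>i\<in>I. Poly_Mapping.single 0 (c i) * F i) (\<lambda>\<alpha>. \<Sum>i\<in>I. c i * f i \<alpha>)"
  using assms by (auto simp: agree_def lookup_sum lookup_scal intro!: sum.cong)

lemma agree_foldr:
  assumes "\<And>n. agree N (Z n) (zeta n)"
  shows "agree N (foldr (\<lambda>n acc. Z n * acc) xs 1) (foldr (\<lambda>n acc. fpsi_mult (zeta n) acc) xs fpsi_one)"
  by (induction xs) (auto intro: agree_mult agree_one assms)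

lemma foldr_prod_mset: "foldr (\<lambda>n acc. Z n * acc) xs (1::'a::comm_monoid_mult) = prod_mset (image_mset Z (mset xs))"
  by (induction xs) auto

definition Col :: "nat \<Rightarrow> 'v set \<Rightarrow> ('v \<Rightarrow> nat) set" where
  "Col N V = V \<rightarrow>\<^sub>E {1..N}"

definition proper :: "'v set set \<Rightarrow> ('v \<Rightarrow> nat) \<Rightarrow> bool" where
  "proper E \<kappa> \<longleftrightarrow> (\<forall>u v. {u, v} \<in> E \<longrightarrow> \<kappa> u \<noteq> \<kappa> v)"

definition PCol :: "nat \<Rightarrow> 'v set \<Rightarrow> 'v set set \<Rightarrow> ('v \<Rightarrow> nat) set" where
  "PCol N V E = {\<kappa>\<in>Col N V. proper E \<kappa>}"

definition tp :: "'v set \<Rightarrow> ('v \<Rightarrow> nat) \<Rightarrow> (nat \<Rightarrow>\<^sub>0 nat)" where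
  "tp V \<kappa> = (\<Sum>v\<in>V. Poly_Mapping.single (\<kappa> v) 1)"

definition Xt :: "'v set \<Rightarrow> 'v set set \<Rightarrow> nat \<Rightarrow> R" where
  "Xt V E N = (\<Sum>\<kappa>\<in>PCol N V E. \<Prod>v\<in>V. Xv (\<kappa> v))"

definition zt :: "nat \<Rightarrow> nat \<Rightarrow> R" where
  "zt N n = (\<Sum>i\<in>{1..N}. (1 + Xv i) ^ n - 1)"

lemma finite_Col: "finite V \<Longrightarrow> finite (Col N V)"
  unfolding Col_def by (rule finite_PiE) auto

lemma finite_PCol: "finite V \<Longrightarrow> finite (PCol N V E)"
  unfolding PCol_def by (rule finite_subset[OF _ finite_Col]) auto

lemma prod_Xv: "finite V \<Longrightarrow> (\<Prod>v\<in>V. Xv (\<kappa> v)) = Poly_Mapping.single (tp V \<kappa>) 1"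
  unfolding tp_def Xv_def
  by (induction V rule: finite_induct) (auto simp: mult_single)

lemma lookup_tp: "finite V \<Longrightarrow> Poly_Mapping.lookup (tp V \<kappa>) i = card {v\<in>V. \<kappa> v = i}"
  unfolding tp_def by (simp add: lookup_sum lookup_single when_def sum.If_cases Int_def)

lemma agree_Xt:
  assumes fin: "finite V"
  shows "agree N (Xt V E N) (chromatic_sym V E)"
  unfolding agree_def
proof (intro allI impI)
  fix \<alpha> :: "nat \<Rightarrow>\<^sub>0 nat" assume K: "Poly_Mapping.keys \<alpha> \<subseteq> {..N}"
  have "Poly_Mapping.lookup (Xt V E N) \<alpha> = (\<Sum>\<kappa>\<in>PCol N V E. (1 when tp V \<kappa> = \<alpha>))"
    by (simp add: Xt_def lookup_sum prod_Xv fin lookup_single)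
  also have "\<dots> = of_nat (card {\<kappa>\<in>PCol N V E. tp V \<kappa> = \<alpha>})"
    by (simp add: when_def sum.If_cases finite_PCol fin Int_def)
  also have "{\<kappa>\<in>PCol N V E. tp V \<kappa> = \<alpha>} = {\<kappa>. proper_coloring V E \<kappa> \<and>
       (\<forall>i. Poly_Mapping.lookup \<alpha> i = card {v\<in>V. \<kappa> v = i})}"
  proof (intro set_eqI iffI)
    fix \<kappa> assume "\<kappa> \<in> {\<kappa>\<in>PCol N V E. tp V \<kappa> = \<alpha>}"
    thus "\<kappa> \<in> {\<kappa>. proper_coloring V E \<kappa> \<and> (\<forall>i. Poly_Mapping.lookup \<alpha> i = card {v\<in>V. \<kappa> v = i})}"
      by (auto simp: PCol_def Col_def proper_def proper_coloring_def lookup_tp fin)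
  next
    fix \<kappa> assume A: "\<kappa> \<in> {\<kappa>. proper_coloring V E \<kappa> \<and> (\<forall>i. Poly_Mapping.lookup \<alpha> i = card {v\<in>V. \<kappa> v = i})}"
    have "\<kappa> v \<le> N" if "v \<in> V" for v
    proof -
      have "card {w\<in>V. \<kappa> w = \<kappa> v} \<noteq> 0" using that fin by (subst card_0_eq) auto
      hence "\<kappa> v \<in> Poly_Mapping.keys \<alpha>" using A by (simp add: in_keys_iff)
      thus ?thesis using K by auto
    qed
    moreover have "tp V \<kappa> = \<alpha>" using A by (intro poly_mapping_eqI) (simp add: lookup_tp fin)
    ultimately show "\<kappa> \<in> {\<kappa>\<in>PCol N V E. tp V \<kappa> = \<alpha>}"
      using A by (auto simp: PCol_def Col_def proper_def proper_coloring_def)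
  qed
  finally show "Poly_Mapping.lookup (Xt V E N) \<alpha> = chromatic_sym V E \<alpha>"
    by (simp add: chromatic_sym_def)
qed

lemma Xv_power: "Xv i ^ a = Poly_Mapping.single (Poly_Mapping.single i a) 1"
proof (induction a)
  case 0 thus ?case by simp
next
  case (Suc a)
  have "Poly_Mapping.single i (Suc a) = Poly_Mapping.single i 1 + Poly_Mapping.single i a"
    by (simp flip: single_add)
  thus ?case using Suc by (simp add: Xv_def mult_single)
qed

lemma one_plus_Xv_power:
  "(1 + Xv i) ^ n - 1 = (\<Sum>a\<in>{1..n}. Poly_Mapping.single (Poly_Mapping.single i a) (of_nat (n choose a)))"
proof -
  have "(1 + Xv i) ^ n = (Xv i + 1) ^ n" by (simp add: add.commute)
  also have "\<dots> = (\<Sum>k\<le>n. of_nat (n choose k) * Xv i ^ k)"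
    by (simp add: binomial_ring)
  also have "\<dots> = 1 + (\<Sum>k\<in>{1..n}. of_nat (n choose k) * Xv i ^ k)"
  proof -
    have "{..n} = insert 0 {1..n}" by auto
    thus ?thesis by simp
  qed
  finally have "(1 + Xv i) ^ n - 1 = (\<Sum>k\<in>{1..n}. of_nat (n choose k) * Xv i ^ k)" by simp
  also have "\<dots> = (\<Sum>a\<in>{1..n}. Poly_Mapping.single (Poly_Mapping.single i a) (of_nat (n choose a)))"
    by (intro sum.cong refl) (simp add: Xv_power flip: single_of_nat add: mult_single)
  finally show ?thesis .
qed

lemma agree_zt: "agree N (zt N n) (zeta n)"
  unfolding agree_def
proof (intro allI impI)
  fix \<alpha> :: "nat \<Rightarrow>\<^sub>0 nat" assume K: "Poly_Mapping.keys \<alpha> \<subseteq> {..N}"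
  have "Poly_Mapping.lookup (zt N n) \<alpha> =
      (\<Sum>i\<in>{1..N}. \<Sum>a\<in>{1..n}. (if Poly_Mapping.single i a = \<alpha> then of_nat (n choose a) else 0))"
    by (simp add: zt_def one_plus_Xv_power lookup_sum lookup_single when_def)
  also have "\<dots> = (\<Sum>a\<in>{1..n}. \<Sum>i\<in>{1..N}. (if Poly_Mapping.single i a = \<alpha> then of_nat (n choose a) else 0))"
    by (rule sum.swap)
  also have "\<dots> =
      (\<Sum>a\<in>{1..n}. of_nat (n choose a) * (\<Sum>i\<in>{1..N}. (1 when Poly_Mapping.single i a = \<alpha>)))"
    by (simp add: sum_distrib_left when_def if_distrib cong: if_cong)
  also have "\<dots> = (\<Sum>a\<in>{1..n}. of_nat (n choose a) * psum a \<alpha>)"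
  proof (intro sum.cong refl arg_cong2[where f="(*)"])
    fix a assume a: "a \<in> {1..n}"
    show "(\<Sum>i\<in>{1..N}. (1 when Poly_Mapping.single i a = \<alpha>)) = psum a \<alpha>"
    proof (cases "\<exists>i\<ge>1. \<alpha> = Poly_Mapping.single i a")
      case True
      then obtain i where i: "i \<ge> 1" "\<alpha> = Poly_Mapping.single i a" by auto
      have "i \<in> {1..N}" using K i a by auto
      moreover have "Poly_Mapping.single j a = \<alpha> \<longleftrightarrow> j = i" for j
        using i a by (metis One_nat_def atLeastAtMost_iff lookup_single_eq lookup_single_not_eq not_one_le_zero)
      ultimately show ?thesis using True by (simp add: psum_def when_def)
    next
      case False
      hence "(\<Sum>i\<in>{1..N}. (1 when Poly_Mapping.single i a = \<alpha>)) = (0::rat)"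
        by (intro sum.neutral) (auto simp: when_def)
      thus ?thesis using False by (simp add: psum_def)
    qed
  qed
  also have "\<dots> = zeta n \<alpha>" by (simp add: zeta_def)
  finally show "Poly_Mapping.lookup (zt N n) \<alpha> = zeta n \<alpha>" .
qed

definition Zm :: "nat \<Rightarrow> nat multiset \<Rightarrow> R" where
  "Zm N lam = prod_mset (image_mset (zt N) lam)"

lemma agree_Zm: "agree N (Zm N lam) (zeta_mono lam)"
  using agree_foldr[of N "zt N" "sorted_list_of_multiset lam", OF agree_zt]
  by (simp add: Zm_def zeta_mono_def foldr_prod_mset)

lemma agree_zeta_eval:
  "agree N (\<Sum>lam\<in>{lam. c lam \<noteq> 0}. Poly_Mapping.single 0 (c lam) * Zm N lam) (zeta_eval c)"
  using agree_lin[of "{lam. c lam \<noteq> 0}" N "Zm N" zeta_mono c, OF agree_Zm]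
  by (simp add: zeta_eval_def[abs_def])


definition rS :: "'v set set \<Rightarrow> ('v \<times> 'v) set" where
  "rS S = {(u,v). \<exists>e\<in>S. u \<in> e \<and> v \<in> e}"

definition Rel :: "'v set \<Rightarrow> 'v set set \<Rightarrow> ('v \<times> 'v) set" where
  "Rel V S = Id_on V \<union> trancl (rS S)"

definition monoS :: "'v set set \<Rightarrow> ('v \<Rightarrow> nat) \<Rightarrow> bool" where
  "monoS S \<kappa> \<longleftrightarrow> (\<forall>e\<in>S. \<forall>u\<in>e. \<forall>v\<in>e. \<kappa> u = \<kappa> v)"

definition pt :: "nat \<Rightarrow> nat \<Rightarrow> R" where
  "pt N m = (\<Sum>i\<in>{1..N}. Xv i ^ m)"

lemma equiv_Rel:
  assumes "\<forall>e\<in>S. e \<subseteq> V"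
  shows "equiv V (Rel V S)"
proof (rule equivI)
  have r: "rS S \<subseteq> V \<times> V" using assms by (auto simp: rS_def)
  hence "trancl (rS S) \<subseteq> V \<times> V" by (rule trancl_subset_Sigma)
  thus "Rel V S \<subseteq> V \<times> V" by (auto simp: Rel_def Id_on_def)
  show "refl_on V (Rel V S)" by (auto simp: refl_on_def Rel_def)
  have "sym (rS S)" by (auto simp: sym_def rS_def)
  hence "sym (trancl (rS S))" by (rule sym_trancl)
  thus "sym (Rel V S)" unfolding Rel_def by (auto simp: sym_def Id_on_def)
  show "trans (Rel V S)" unfolding Rel_def trans_def
    by (auto intro: trancl_trans simp: Id_on_def)
qed

lemma monoS_Rel:
  "monoS S \<kappa> \<longleftrightarrow> (\<forall>(u,v)\<in>Rel V S. \<kappa> u = \<kappa> v)"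
proof
  assume m: "monoS S \<kappa>"
  have "\<kappa> u = \<kappa> v" if "(u,v) \<in> trancl (rS S)" for u v
    using that
  proof (induction rule: trancl_induct)
    case (base y) thus ?case using m by (auto simp: rS_def monoS_def)
  next
    case (step y z) thus ?case using m by (auto simp: rS_def monoS_def)
  qed
  thus "\<forall>(u,v)\<in>Rel V S. \<kappa> u = \<kappa> v" by (auto simp: Rel_def)
next
  assume "\<forall>(u,v)\<in>Rel V S. \<kappa> u = \<kappa> v"
  moreover have "rS S \<subseteq> Rel V S" by (auto simp: Rel_def)
  ultimately show "monoS S \<kappa>" by (auto simp: monoS_def rS_def)
qed

lemma quotient_image: "(\<lambda>v. R``{v}) ` V = V // R"
  by (auto simp: quotient_def)

lemma CL:
  assumes fin: "finite V" and sub: "\<forall>e\<in>S. e \<subseteq> V"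
  shows "(\<Sum>\<kappa>\<in>{\<kappa>\<in>Col N V. monoS S \<kappa>}. \<Prod>v\<in>V. Xv (\<kappa> v)) = (\<Prod>B\<in>V // Rel V S. pt N (card B))"
proof -
  define R where "R = Rel V S"
  have eq: "equiv V R" using equiv_Rel[OF sub] by (simp add: R_def)
  have resp: "monoS S \<kappa> \<longleftrightarrow> (\<forall>(u,v)\<in>R. \<kappa> u = \<kappa> v)" for \<kappa>
    using monoS_Rel by (simp add: R_def)
  define P where "P = PiE (V // R) (\<lambda>_. {1..N::nat})"
  define T where "T = {\<kappa>\<in>Col N V. monoS S \<kappa>}"
  define h where "h g = (\<lambda>v\<in>V. g (R``{v}))" for g :: "'a set \<Rightarrow> nat"
  define h' where "h' \<kappa> = (\<lambda>B\<in>V // R. \<kappa> (SOME v. v \<in> B))" for \<kappa> :: "'a \<Rightarrow> nat"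
  have some_in: "(SOME v. v \<in> B) \<in> B" if "B \<in> V // R" for B
    using in_quotient_imp_non_empty[OF eq that] by (simp add: some_in_eq)
  have some_cls: "R``{SOME v. v \<in> B} = B" "(SOME v. v \<in> B) \<in> V" if "B \<in> V // R" for B
  proof -
    have "\<exists>w\<in>V. B = R``{w}" using that unfolding quotient_def by blast
    then obtain w where w: "B = R``{w}" "w \<in> V" by blast
    define x where "x = (SOME v. v \<in> B)"
    have "(w, x) \<in> R" using some_in[OF that] w unfolding x_def by blast
    hence "R``{w} = R``{x}" "x \<in> V" using equiv_class_eq_iff[OF eq, of w x] by blast+
    moreover have "R``{x} = B" using calculation(1) w(1) by simp
    ultimately show "R``{SOME v. v \<in> B} = B" "(SOME v. v \<in> B) \<in> V"
      unfolding x_def by simp_all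
  qed
  have bij: "bij_betw h P T"
  proof (rule bij_betw_byWitness[where f'=h'])
    show "\<forall>g\<in>P. h' (h g) = g"
    proof
      fix g assume g: "g \<in> P"
      show "h' (h g) = g"
      proof
        fix B show "h' (h g) B = g B"
          using g some_cls[of B] by (auto simp: h'_def h_def P_def PiE_def extensional_def)
      qed
    qed
    show "\<forall>\<kappa>\<in>T. h (h' \<kappa>) = \<kappa>"
    proof
      fix \<kappa> assume k: "\<kappa> \<in> T"
      show "h (h' \<kappa>) = \<kappa>"
      proof
        fix v show "h (h' \<kappa>) v = \<kappa> v"
        proof (cases "v \<in> V")
          case True
          have B: "R``{v} \<in> V // R" using True by (rule quotientI)
          have "(v, SOME x. x \<in> R``{v}) \<in> R" using some_in[OF B] by auto
          hence "\<kappa> (SOME x. x \<in> R``{v}) = \<kappa> v" using k resp unfolding T_def by auto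
          thus ?thesis using True B by (simp add: h_def h'_def)
        next
          case False thus ?thesis using k by (auto simp: h_def T_def Col_def PiE_def extensional_def)
        qed
      qed
    qed
    show "h ` P \<subseteq> T"
    proof
      fix \<kappa> assume "\<kappa> \<in> h ` P"
      then obtain g where g: "g \<in> P" "\<kappa> = h g" by auto
      have "\<kappa> \<in> Col N V" using g by (auto simp: h_def P_def Col_def intro: quotientI)
      moreover have "\<forall>(u,v)\<in>R. \<kappa> u = \<kappa> v"
      proof (clarify)
        fix u v assume uv: "(u,v) \<in> R"
        hence "R``{u} = R``{v}" "u \<in> V" "v \<in> V" using eq by (auto simp: equiv_class_eq_iff)
        thus "\<kappa> u = \<kappa> v" using g by (simp add: h_def)
      qed
      ultimately show "\<kappa> \<in> T" using resp by (auto simp: T_def)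
    qed
    show "h' ` T \<subseteq> P"
      using some_cls by (auto simp: h'_def T_def P_def Col_def)
  qed
  have mon: "(\<Prod>v\<in>V. Xv (h g v)) = (\<Prod>B\<in>V // R. Xv (g B) ^ card B)" for g
  proof -
    have "(\<Prod>v\<in>V. Xv (h g v)) = (\<Prod>v\<in>V. Xv (g (R``{v})))" by (simp add: h_def)
    also have "\<dots> = (\<Prod>B\<in>(\<lambda>v. R``{v}) ` V. \<Prod>v\<in>{x\<in>V. R``{x} = B}. Xv (g (R``{v})))"
      by (rule prod.image_gen[OF fin])
    also have "\<dots> = (\<Prod>B\<in>V // R. Xv (g B) ^ card B)"
    proof (unfold quotient_image, rule prod.cong[OF refl])
      fix B assume B: "B \<in> V // R"
      have "\<exists>w\<in>V. B = R``{w}" using B unfolding quotient_def by blast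
      then obtain w where w: "B = R``{w}" "w \<in> V" by blast
      have "{x\<in>V. R``{x} = B} = B"
        using eq w by (auto simp: equiv_class_eq_iff dest: equiv_type)
      have "(\<Prod>v\<in>{x\<in>V. R``{x} = B}. Xv (g (R``{v}))) = (\<Prod>v\<in>{x\<in>V. R``{x} = B}. Xv (g B))"
        by (rule prod.cong) auto
      thus "(\<Prod>v\<in>{x\<in>V. R``{x} = B}. Xv (g (R``{v}))) = Xv (g B) ^ card B"
        using \<open>{x\<in>V. R``{x} = B} = B\<close> by simp
    qed
    finally show ?thesis .
  qed
  have "(\<Sum>\<kappa>\<in>T. \<Prod>v\<in>V. Xv (\<kappa> v)) = (\<Sum>g\<in>P. \<Prod>v\<in>V. Xv (h g v))"
    using sum.reindex_bij_betw[OF bij, of "\<lambda>\<kappa>. \<Prod>v\<in>V. Xv (\<kappa> v)"] by (rule sym)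
  also have "\<dots> = (\<Sum>g\<in>P. \<Prod>B\<in>V // R. Xv (g B) ^ card B)" by (simp add: mon)
  also have "\<dots> = (\<Prod>B\<in>V // R. \<Sum>i\<in>{1..N}. Xv i ^ card B)"
    unfolding P_def
    using prod_sum_PiE[of "V // R" "\<lambda>_. {1..N}" "\<lambda>B i. Xv i ^ card B"] finite_quotient[OF fin equiv_type[OF eq]]
    by simp
  finally show ?thesis by (simp add: T_def R_def pt_def)
qed


lemma prod_of_bool: "finite A \<Longrightarrow> (\<Prod>x\<in>A. (of_bool (P x) :: 'a::comm_semiring_1)) = of_bool (\<forall>x\<in>A. P x)"
  by (induction A rule: finite_induct) auto

lemma prod_neg: "finite A \<Longrightarrow> (\<Prod>x\<in>A. - (f x :: 'a::comm_ring_1)) = (-1) ^ card A * (\<Prod>x\<in>A. f x)"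
  by (induction A rule: finite_induct) auto

lemma sum_of_bool_filter:
  assumes "finite A"
  shows "(\<Sum>x\<in>A. (of_bool (P x) :: 'a::comm_semiring_1) * f x) = sum f {x\<in>A. P x}"
proof -
  have "sum f {x\<in>A. P x} = (\<Sum>x\<in>A. if P x then f x else 0)" using sum.inter_filter[OF assms] .
  also have "\<dots> = (\<Sum>x\<in>A. of_bool (P x) * f x)" by (rule sum.cong) auto
  finally show ?thesis by simp
qed

lemma incl_excl:
  assumes "finite E"
  shows "(of_bool (\<forall>e\<in>E. \<not> m e) :: 'a::comm_ring_1) = (\<Sum>S\<in>Pow E. (-1) ^ card S * of_bool (\<forall>e\<in>S. m e))"
proof -
  have "(\<Prod>e\<in>E. - of_bool (m e) + 1) = (of_bool (\<forall>e\<in>E. \<not> m e) :: 'a)"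
    using assms by (induction E rule: finite_induct) auto
  hence "(of_bool (\<forall>e\<in>E. \<not> m e) :: 'a) = (\<Prod>e\<in>E. - of_bool (m e) + 1)" by simp
  also have "\<dots> = (\<Sum>S\<in>Pow E. (\<Prod>e\<in>S. - of_bool (m e)) * (\<Prod>e\<in>E - S. 1))"
    by (rule prod_add[OF assms])
  also have "\<dots> = (\<Sum>S\<in>Pow E. (-1) ^ card S * of_bool (\<forall>e\<in>S. m e))"
  proof (rule sum.cong[OF refl])
    fix S assume "S \<in> Pow E"
    hence fS: "finite S" using assms finite_subset by auto
    show "(\<Prod>e\<in>S. - of_bool (m e)) * (\<Prod>e\<in>E - S. 1) = ((-1) ^ card S * of_bool (\<forall>e\<in>S. m e) :: 'a)"
      using prod_neg[OF fS, of "\<lambda>e. of_bool (m e) :: 'a"] prod_of_bool[OF fS, of m, where 'a='a] by simp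
  qed
  finally show ?thesis .
qed

lemma proper_iff:
  assumes "simple_graph V E"
  shows "proper E \<kappa> \<longleftrightarrow> (\<forall>e\<in>E. \<not> monoS {e} \<kappa>)"
proof
  assume p: "proper E \<kappa>"
  show "\<forall>e\<in>E. \<not> monoS {e} \<kappa>"
  proof (intro ballI notI)
    fix e assume e: "e \<in> E" and m: "monoS {e} \<kappa>"
    have "card e = 2" using assms e by (auto simp: simple_graph_def)
    then obtain u v where uv: "e = {u, v}" "u \<noteq> v" by (auto simp: card_2_iff)
    show False using p m e uv by (auto simp: proper_def monoS_def)
  qed
next
  assume a: "\<forall>e\<in>E. \<not> monoS {e} \<kappa>"
  show "proper E \<kappa>" unfolding proper_def
  proof (intro allI impI notI)
    fix u v assume "{u, v} \<in> E" "\<kappa> u = \<kappa> v"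
    thus False using a by (auto simp: monoS_def)
  qed
qed

lemma Xt_step1:
  assumes G: "simple_graph V E"
  shows "Xt V E N = (\<Sum>S\<in>Pow E. of_int ((-1) ^ card S) *
            (\<Sum>\<kappa>\<in>{\<kappa>\<in>Col N V. monoS S \<kappa>}. \<Prod>v\<in>V. Xv (\<kappa> v)))"
proof -
  have finV: "finite V" using G by (simp add: simple_graph_def)
  have finE: "finite E" using G unfolding simple_graph_def
    by (meson Pow_iff finite_Pow_iff rev_finite_subset subsetI)
  have "Xt V E N = (\<Sum>\<kappa>\<in>Col N V. of_bool (proper E \<kappa>) * (\<Prod>v\<in>V. Xv (\<kappa> v)))"
    unfolding Xt_def PCol_def by (simp add: sum_of_bool_filter finite_Col finV Int_def)
  also have "\<dots> = (\<Sum>\<kappa>\<in>Col N V. \<Sum>S\<in>Pow E. of_int ((-1) ^ card S) * (of_bool (monoS S \<kappa>) * (\<Prod>v\<in>V. Xv (\<kappa> v))))"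
  proof (rule sum.cong[OF refl])
    fix \<kappa>
    have "(of_bool (proper E \<kappa>) :: R) = (\<Sum>S\<in>Pow E. (-1) ^ card S * of_bool (\<forall>e\<in>S. monoS {e} \<kappa>))"
      unfolding proper_iff[OF G] by (rule incl_excl[OF finE])
    moreover have "(\<forall>e\<in>S. monoS {e} \<kappa>) = monoS S \<kappa>" for S by (auto simp: monoS_def)
    ultimately show "of_bool (proper E \<kappa>) * (\<Prod>v\<in>V. Xv (\<kappa> v)) =
        (\<Sum>S\<in>Pow E. of_int ((-1) ^ card S) * (of_bool (monoS S \<kappa>) * (\<Prod>v\<in>V. Xv (\<kappa> v))))"
      by (simp add: sum_distrib_right mult.assoc)
  qed
  also have "\<dots> = (\<Sum>S\<in>Pow E. of_int ((-1) ^ card S) * (\<Sum>\<kappa>\<in>Col N V. of_bool (monoS S \<kappa>) * (\<Prod>v\<in>V. Xv (\<kappa> v))))"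
    by (subst sum.swap) (simp add: sum_distrib_left)
  also have "\<dots> = (\<Sum>S\<in>Pow E. of_int ((-1) ^ card S) *
            (\<Sum>\<kappa>\<in>{\<kappa>\<in>Col N V. monoS S \<kappa>}. \<Prod>v\<in>V. Xv (\<kappa> v)))"
    by (simp add: sum_of_bool_filter finite_Col finV Int_def)
  finally show ?thesis .
qed

definition cf :: "nat \<Rightarrow> nat \<Rightarrow> int" where
  "cf m j = (-1) ^ (m - j) * int (m choose j)"

lemma var_inv:
  assumes "m \<ge> 1"
  shows "(x :: 'a::comm_ring_1) ^ m = (\<Sum>j\<in>{1..m}. of_int (cf m j) * ((1 + x) ^ j - 1))"
proof -
  have "x ^ m = ((1 + x) + (-1)) ^ m" by simp
  also have "\<dots> = (\<Sum>j\<le>m. of_nat (m choose j) * (1 + x) ^ j * (-1) ^ (m - j))"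
    by (rule binomial_ring)
  finally have A: "x ^ m = (\<Sum>j\<le>m. of_nat (m choose j) * (1 + x) ^ j * (-1) ^ (m - j))" .
  have "(0::'a) = (1 + (-1)) ^ m" using assms by (simp add: power_0_left)
  also have "\<dots> = (\<Sum>j\<le>m. of_nat (m choose j) * 1 ^ j * (-1) ^ (m - j))"
    by (rule binomial_ring)
  finally have B: "0 = (\<Sum>j\<le>m. of_nat (m choose j) * (-1) ^ (m - j) :: 'a)" by simp
  have "x ^ m = (\<Sum>j\<le>m. of_nat (m choose j) * (1 + x) ^ j * (-1) ^ (m - j)) -
                (\<Sum>j\<le>m. of_nat (m choose j) * (-1) ^ (m - j))"
    using A B by simp
  also have "\<dots> = (\<Sum>j\<le>m. of_int (cf m j) * ((1 + x) ^ j - 1))"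
    by (simp add: sum_subtractf[symmetric] cf_def algebra_simps)
  also have "\<dots> = (\<Sum>j\<in>{1..m}. of_int (cf m j) * ((1 + x) ^ j - 1))"
  proof -
    have "{..m} = insert 0 {1..m}" by auto
    thus ?thesis by simp
  qed
  finally show ?thesis .
qed

lemma pt_inv:
  assumes "m \<ge> 1"
  shows "pt N m = (\<Sum>j\<in>{1..m}. of_int (cf m j) * zt N j)"
proof -
  have "pt N m = (\<Sum>i\<in>{1..N}. \<Sum>j\<in>{1..m}. of_int (cf m j) * ((1 + Xv i) ^ j - 1))"
    unfolding pt_def by (intro sum.cong refl) (rule var_inv[OF assms])
  also have "\<dots> = (\<Sum>j\<in>{1..m}. of_int (cf m j) * zt N j)"
    by (subst sum.swap) (simp add: zt_def sum_distrib_left)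
  finally show ?thesis .
qed


definition Q :: "'v set \<Rightarrow> 'v set set \<Rightarrow> 'v set set" where
  "Q V S = V // Rel V S"

definition Gs :: "'v set \<Rightarrow> 'v set set \<Rightarrow> ('v set \<Rightarrow> nat) set" where
  "Gs V S = PiE (Q V S) (\<lambda>B. {1..card B})"

definition Ix :: "'v set \<Rightarrow> 'v set set \<Rightarrow> ('v set set \<times> ('v set \<Rightarrow> nat)) set" where
  "Ix V E = Sigma (Pow E) (Gs V)"

definition Lm :: "'v set \<Rightarrow> ('v set set \<times> ('v set \<Rightarrow> nat)) \<Rightarrow> nat multiset" where
  "Lm V x = image_mset (snd x) (mset_set (Q V (fst x)))"

definition Wt :: "'v set \<Rightarrow> ('v set set \<times> ('v set \<Rightarrow> nat)) \<Rightarrow> int" where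
  "Wt V x = (-1) ^ card (fst x) * (\<Prod>B\<in>Q V (fst x). cf (card B) (snd x B))"

definition cG :: "'v set \<Rightarrow> 'v set set \<Rightarrow> nat multiset \<Rightarrow> rat" where
  "cG V E lam = of_int (\<Sum>x\<in>{x\<in>Ix V E. Lm V x = lam}. Wt V x)"

lemma cG_ne: "cG V E lam \<noteq> 0 \<Longrightarrow> {x\<in>Ix V E. Lm V x = lam} \<noteq> {}"
proof
  assume "cG V E lam \<noteq> 0" "{x\<in>Ix V E. Lm V x = lam} = {}"
  thus False unfolding cG_def by simp
qed

lemma G_facts:
  assumes G: "simple_graph V E"
  shows "finite V" "finite E"
  using G unfolding simple_graph_def
  by (auto intro: rev_finite_subset[of "Pow V"])

lemma G_sub: "simple_graph V E \<Longrightarrow> S \<subseteq> E \<Longrightarrow> \<forall>e\<in>S. e \<subseteq> V"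
  unfolding simple_graph_def by auto

lemma finite_Q: "finite V \<Longrightarrow> \<forall>e\<in>S. e \<subseteq> V \<Longrightarrow> finite (Q V S)"
  unfolding Q_def by (rule finite_quotient) (auto dest: equiv_type[OF equiv_Rel])

lemma Q_card: "finite V \<Longrightarrow> \<forall>e\<in>S. e \<subseteq> V \<Longrightarrow> B \<in> Q V S \<Longrightarrow> card B \<ge> 1"
  unfolding Q_def
  using in_quotient_imp_non_empty[OF equiv_Rel] in_quotient_imp_subset[OF equiv_Rel]
  by (metis One_nat_def Suc_leI card_gt_0_iff rev_finite_subset)

lemma finite_Gs:
  assumes "simple_graph V E" "S \<subseteq> E"
  shows "finite (Gs V S)"
proof -
  have "finite (Q V S)" using finite_Q[OF G_facts(1)[OF assms(1)] G_sub[OF assms]] .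
  thus ?thesis unfolding Gs_def by (intro finite_PiE) auto
qed

lemma finite_Ix:
  assumes G: "simple_graph V E"
  shows "finite (Ix V E)"
proof -
  show ?thesis unfolding Ix_def using G_facts[OF G] finite_Gs[OF G] by auto
qed

lemma Zm_Lm: "finite (Q V S) \<Longrightarrow> Zm N (Lm V (S, g)) = (\<Prod>B\<in>Q V S. zt N (g B))"
  by (simp add: Zm_def Lm_def prod_unfold_prod_mset image_mset.compositionality comp_def)

lemma Xt_expand:
  assumes G: "simple_graph V E"
  shows "Xt V E N = (\<Sum>x\<in>Ix V E. of_int (Wt V x) * Zm N (Lm V x))"
proof -
  have finV: "finite V" and finE: "finite E" using G_facts[OF G] by auto
  have inner: "(\<Sum>\<kappa>\<in>{\<kappa>\<in>Col N V. monoS S \<kappa>}. \<Prod>v\<in>V. Xv (\<kappa> v)) =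
      (\<Sum>g\<in>Gs V S. of_int (\<Prod>B\<in>Q V S. cf (card B) (g B)) * Zm N (Lm V (S, g)))"
    if S: "S \<in> Pow E" for S
  proof -
    have sub: "\<forall>e\<in>S. e \<subseteq> V" using G_sub[OF G] S by auto
    have fQ: "finite (Q V S)" using finite_Q[OF finV sub] .
    have "(\<Sum>\<kappa>\<in>{\<kappa>\<in>Col N V. monoS S \<kappa>}. \<Prod>v\<in>V. Xv (\<kappa> v)) = (\<Prod>B\<in>Q V S. pt N (card B))"
      unfolding Q_def by (rule CL[OF finV sub])
    also have "\<dots> = (\<Prod>B\<in>Q V S. \<Sum>j\<in>{1..card B}. of_int (cf (card B) j) * zt N j)"
      by (intro prod.cong refl pt_inv Q_card[OF finV sub])
    also have "\<dots> = (\<Sum>g\<in>Gs V S. \<Prod>B\<in>Q V S. of_int (cf (card B) (g B)) * zt N (g B))"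
      unfolding Gs_def by (rule prod_sum_PiE) (use fQ in auto)
    also have "\<dots> = (\<Sum>g\<in>Gs V S. of_int (\<Prod>B\<in>Q V S. cf (card B) (g B)) * Zm N (Lm V (S, g)))"
      by (simp add: prod.distrib Zm_Lm[OF fQ])
    finally show ?thesis .
  qed
  have "Xt V E N = (\<Sum>S\<in>Pow E. of_int ((-1) ^ card S) *
            (\<Sum>g\<in>Gs V S. of_int (\<Prod>B\<in>Q V S. cf (card B) (g B)) * Zm N (Lm V (S, g))))"
    unfolding Xt_step1[OF G] by (intro sum.cong refl) (simp add: inner)
  also have "\<dots> = (\<Sum>S\<in>Pow E. \<Sum>g\<in>Gs V S. of_int (Wt V (S, g)) * Zm N (Lm V (S, g)))"
    by (simp add: sum_distrib_left Wt_def mult.assoc)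
  also have "\<dots> = (\<Sum>x\<in>Ix V E. of_int (Wt V x) * Zm N (Lm V x))"
    unfolding Ix_def
    using sum.Sigma[of "Pow E" "Gs V" "\<lambda>S g. of_int (Wt V (S,g)) * Zm N (Lm V (S,g))"] finite_Gs[OF G] finE
    by (simp add: split_def)
  finally show ?thesis .
qed

lemma Xt_cG:
  assumes G: "simple_graph V E"
  shows "Xt V E N = (\<Sum>lam\<in>{lam. cG V E lam \<noteq> 0}. Poly_Mapping.single 0 (cG V E lam) * Zm N lam)"
proof -
  let ?I = "Ix V E" and ?L = "Lm V"
  have fI: "finite ?I" by (rule finite_Ix[OF G])
  have "Xt V E N = (\<Sum>lam\<in>?L ` ?I. \<Sum>x\<in>{x\<in>?I. ?L x = lam}. of_int (Wt V x) * Zm N (?L x))"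
    unfolding Xt_expand[OF G] by (rule sum.image_gen[OF fI])
  also have "\<dots> = (\<Sum>lam\<in>?L ` ?I. Poly_Mapping.single 0 (cG V E lam) * Zm N lam)"
  proof (rule sum.cong[OF refl])
    fix lam
    have "(\<Sum>x\<in>{x\<in>?I. ?L x = lam}. of_int (Wt V x) * Zm N (?L x)) =
          (\<Sum>x\<in>{x\<in>?I. ?L x = lam}. of_int (Wt V x) * Zm N lam)"
      by (rule sum.cong) auto
    also have "\<dots> = of_int (\<Sum>x\<in>{x\<in>?I. ?L x = lam}. Wt V x) * Zm N lam"
      by (simp add: sum_distrib_right)
    also have "\<dots> = Poly_Mapping.single 0 (cG V E lam) * Zm N lam"
      by (simp add: cG_def flip: single_of_int)
    finally show "(\<Sum>x\<in>{x\<in>?I. ?L x = lam}. of_int (Wt V x) * Zm N (?L x)) =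
          Poly_Mapping.single 0 (cG V E lam) * Zm N lam" .
  qed
  also have "\<dots> = (\<Sum>lam\<in>{lam. cG V E lam \<noteq> 0}. Poly_Mapping.single 0 (cG V E lam) * Zm N lam)"
  proof (rule sum.mono_neutral_right)
    show "finite (?L ` ?I)" using fI by simp
    show "{lam. cG V E lam \<noteq> 0} \<subseteq> ?L ` ?I"
    proof
      fix lam assume "lam \<in> {lam. cG V E lam \<noteq> 0}"
      hence "{x\<in>?I. ?L x = lam} \<noteq> {}" using cG_ne by blast
      thus "lam \<in> ?L ` ?I" by auto
    qed
    show "\<forall>i\<in>?L ` ?I - {lam. cG V E lam \<noteq> 0}. Poly_Mapping.single 0 (cG V E i) * Zm N i = 0"
      by simp
  qed
  finally show ?thesis .
qed

lemma cG_poly: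
  assumes G: "simple_graph V E"
  shows "zeta_poly (cG V E)"
  unfolding zeta_poly_def
proof
  let ?I = "Ix V E" and ?L = "Lm V"
  have sub: "{lam. cG V E lam \<noteq> 0} \<subseteq> ?L ` ?I"
  proof
    fix lam assume "lam \<in> {lam. cG V E lam \<noteq> 0}"
    hence "{x\<in>?I. ?L x = lam} \<noteq> {}" using cG_ne by blast
    thus "lam \<in> ?L ` ?I" by auto
  qed
  thus "finite {lam. cG V E lam \<noteq> 0}" using finite_Ix[OF G] by (meson finite_imageI finite_subset)
  show "\<forall>lam. cG V E lam \<noteq> 0 \<longrightarrow> 0 \<notin># lam"
  proof (intro allI impI)
    fix lam assume "cG V E lam \<noteq> 0"
    then obtain S g where Sg: "S \<in> Pow E" "g \<in> Gs V S" "lam = ?L (S, g)" using sub by (auto simp: Ix_def)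
    have "\<forall>e\<in>S. e \<subseteq> V" using G_sub[OF G] Sg(1) by auto
    hence fQ: "finite (Q V S)" using finite_Q[OF G_facts(1)[OF G]] by blast
    show "0 \<notin># lam" using Sg fQ by (force simp: Lm_def Gs_def PiE_def Pi_def)
  qed
qed

lemma existence:
  assumes G: "simple_graph V E"
  shows "zeta_eval (cG V E) = chromatic_sym V E"
proof
  fix \<alpha> :: "nat \<Rightarrow>\<^sub>0 nat"
  define N where "N = Sum (Poly_Mapping.keys \<alpha>)"
  have K: "Poly_Mapping.keys \<alpha> \<subseteq> {..N}"
    unfolding N_def by (auto intro: member_le_sum)
  have "zeta_eval (cG V E) \<alpha> = Poly_Mapping.lookup
      (\<Sum>lam\<in>{lam. cG V E lam \<noteq> 0}. Poly_Mapping.single 0 (cG V E lam) * Zm N lam) \<alpha>"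
    using agree_zeta_eval[of N "cG V E"] K by (simp add: agree_def)
  also have "\<dots> = Poly_Mapping.lookup (Xt V E N) \<alpha>" by (simp add: Xt_cG[OF G])
  also have "\<dots> = chromatic_sym V E \<alpha>"
    using agree_Xt[of V N E] G_facts[OF G] K by (simp add: agree_def)
  finally show "zeta_eval (cG V E) \<alpha> = chromatic_sym V E \<alpha>" .
qed


definition AOs :: "'v set set \<Rightarrow> ('v \<times> 'v) set set" where
  "AOs E = {D. orientation E D \<and> acyclic D}"

definition indep :: "'v set \<Rightarrow> 'v set set \<Rightarrow> 'v set \<Rightarrow> bool" where
  "indep V E S \<longleftrightarrow> S \<subseteq> V \<and> (\<forall>e\<in>E. \<not> e \<subseteq> S)"

definition Em :: "'v set set \<Rightarrow> 'v set \<Rightarrow> 'v set set" where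
  "Em E S = {e\<in>E. e \<inter> S = {}}"

lemma sg_edge:
  assumes "simple_graph V E" "{u, v} \<in> E"
  shows "u \<noteq> v" "u \<in> V" "v \<in> V"
  using assms unfolding simple_graph_def by (auto dest!: bspec[of _ _ "{u,v}"] simp: card_insert_if split: if_splits)

lemma sg_Em: "simple_graph V E \<Longrightarrow> S \<subseteq> V \<Longrightarrow> simple_graph (V - S) (Em E S)"
  unfolding simple_graph_def Em_def by auto

lemma orient_sub: "orientation E D \<Longrightarrow> simple_graph V E \<Longrightarrow> D \<subseteq> V \<times> V"
  unfolding orientation_def using sg_edge by fastforce

lemma finite_orient: "simple_graph V E \<Longrightarrow> finite {D. orientation E D}"
proof -
  assume G: "simple_graph V E"
  have "{D. orientation E D} \<subseteq> Pow (V \<times> V)" using orient_sub[OF _ G] by auto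
  moreover have "finite V" using G by (simp add: simple_graph_def)
  ultimately show ?thesis by (meson finite_Pow_iff finite_SigmaI finite_subset)
qed

lemma finite_AOs: "simple_graph V E \<Longrightarrow> finite (AOs E)"
  unfolding AOs_def using finite_orient by (rule finite_subset[rotated]) auto

lemma acyclic_union_in:
  assumes ac: "acyclic D" and D: "\<forall>(x,y)\<in>D. x \<notin> S \<and> y \<notin> S"
    and I: "\<forall>(x,y)\<in>I. y \<in> S \<and> x \<notin> S"
  shows "acyclic (D \<union> I)"
proof -
  have claim: "(x,y) \<in> D\<^sup>+" if "(x,y) \<in> (D \<union> I)\<^sup>+" "y \<notin> S" for x y
    using that
  proof (induction rule: trancl_induct)
    case (base y) thus ?case using I by auto
  next
    case (step y z)
    hence "(y,z) \<in> D" using I by auto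
    hence "y \<notin> S" using D by auto
    thus ?case using step \<open>(y,z) \<in> D\<close> by (meson trancl.trancl_into_trancl)
  qed
  show ?thesis unfolding acyclic_def
  proof
    fix x show "(x, x) \<notin> (D \<union> I)\<^sup>+"
    proof
      assume xx: "(x, x) \<in> (D \<union> I)\<^sup>+"
      show False
      proof (cases "x \<in> S")
        case True
        obtain z where "(x,z) \<in> D \<union> I" using tranclD[OF xx] by blast
        thus False using True D I by auto
      next
        case False
        thus False using claim[OF xx] ac by (auto simp: acyclic_def)
      qed
    qed
  qed
qed

lemma BIJ:
  assumes G: "simple_graph V E" and ind: "indep V E S"
  shows "card {D\<in>AOs E. S \<subseteq> sinks V D} = card (AOs (Em E S))"
proof -
  let ?A = "{D\<in>AOs E. S \<subseteq> sinks V D}" and ?B = "AOs (Em E S)"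
  define In where "In = {(x,y). y \<in> S \<and> {y,x} \<in> E}"
  define f where "f D = {(u,v)\<in>D. u \<notin> S \<and> v \<notin> S}" for D :: "('a \<times> 'a) set"
  define f' where "f' D = D \<union> In" for D :: "('a \<times> 'a) set"
  have nosub: "\<not> (u \<in> S \<and> v \<in> S)" if "{u,v} \<in> E" for u v
    using ind that unfolding indep_def by auto
  have comm: "{u,v} = {v,u}" for u v :: 'a by auto
  have InS: "\<forall>(x,y)\<in>In. y \<in> S \<and> x \<notin> S" using nosub comm unfolding In_def by fastforce
  have bij: "bij_betw f ?A ?B"
  proof (rule bij_betw_byWitness[where f'=f'])
    show "\<forall>D\<in>?A. f' (f D) = D"
    proof
      fix D assume D: "D \<in> ?A"
      hence o: "orientation E D" and sk: "S \<subseteq> sinks V D" by (auto simp: AOs_def)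
      show "f' (f D) = D"
      proof (intro set_eqI iffI)
        fix p assume "p \<in> f' (f D)"
        moreover obtain x y where p: "p = (x,y)" by (cases p)
        ultimately have "(x,y) \<in> f D \<or> (x,y) \<in> In" by (auto simp: f'_def)
        thus "p \<in> D"
        proof
          assume "(x,y) \<in> In"
          hence "y \<in> S" "{y,x} \<in> E" by (auto simp: In_def)
          hence "(y,x) \<notin> D" using sk by (auto simp: sinks_def)
          thus ?thesis using o \<open>{y,x} \<in> E\<close> p unfolding orientation_def by blast
        qed (auto simp: f_def p)
      next
        fix p assume pD: "p \<in> D"
        then obtain x y where p: "p = (x,y)" by (cases p)
        have e: "{x,y} \<in> E" using o pD p by (auto simp: orientation_def)
        have "x \<notin> S" using sk pD p by (auto simp: sinks_def)
        show "p \<in> f' (f D)"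
        proof (cases "y \<in> S")
          case True thus ?thesis using e p comm by (auto simp: f'_def In_def)
        next
          case False thus ?thesis using pD p \<open>x \<notin> S\<close> by (auto simp: f'_def f_def)
        qed
      qed
    qed
    show "\<forall>D\<in>?B. f (f' D) = D"
    proof
      fix D assume D: "D \<in> ?B"
      hence "\<forall>(u,v)\<in>D. u \<notin> S \<and> v \<notin> S"
        by (auto simp: AOs_def orientation_def Em_def)
      thus "f (f' D) = D" using InS by (auto simp: f_def f'_def)
    qed
    show "f ` ?A \<subseteq> ?B"
    proof
      fix D' assume "D' \<in> f ` ?A"
      then obtain D where D: "D \<in> ?A" "D' = f D" by auto
      hence o: "orientation E D" and ac: "acyclic D" by (auto simp: AOs_def)
      have "orientation (Em E S) D'"
        unfolding orientation_def
      proof (intro conjI allI impI)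
        show "D' \<subseteq> {(u, v). {u, v} \<in> Em E S}"
          using o D(2) by (auto simp: orientation_def f_def Em_def)
      next
        fix u v assume "{u,v} \<in> Em E S"
        hence "{u,v} \<in> E" "u \<notin> S" "v \<notin> S" by (auto simp: Em_def)
        thus "((u, v) \<in> D') = ((v, u) \<notin> D')"
          using o D(2) unfolding orientation_def f_def by auto
      qed
      moreover have "D' \<subseteq> D" using D(2) by (auto simp: f_def)
      hence "acyclic D'" using ac acyclic_subset by blast
      ultimately show "D' \<in> ?B" by (simp add: AOs_def)
    qed
    show "f' ` ?B \<subseteq> ?A"
    proof
      fix D assume "D \<in> f' ` ?B"
      then obtain D' where D': "D' \<in> ?B" "D = f' D'" by auto
      hence o: "orientation (Em E S) D'" and ac: "acyclic D'" by (auto simp: AOs_def)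
      have D'S: "\<forall>(u,v)\<in>D'. u \<notin> S \<and> v \<notin> S" using o by (auto simp: orientation_def Em_def)
      have "orientation E D"
        unfolding orientation_def
      proof (intro conjI allI impI)
        show "D \<subseteq> {(u, v). {u, v} \<in> E}"
          using o D'(2) comm by (auto simp: orientation_def f'_def In_def Em_def)
      next
        fix u v assume e: "{u,v} \<in> E"
        show "((u, v) \<in> D) = ((v, u) \<notin> D)"
        proof (cases "u \<in> S \<or> v \<in> S")
          case True
          thus ?thesis using nosub[OF e] e D'S InS comm D'(2) by (auto simp: f'_def In_def)
        next
          case False
          hence "{u,v} \<in> Em E S" using e by (auto simp: Em_def)
          hence "((u, v) \<in> D') = ((v, u) \<notin> D')" using o by (auto simp: orientation_def)
          thus ?thesis using False D'(2) by (auto simp: f'_def In_def)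
        qed
      qed
      moreover have "acyclic D" using acyclic_union_in[OF ac D'S InS] D'(2) by (simp add: f'_def)
      moreover have "S \<subseteq> sinks V D"
      proof
        fix u assume u: "u \<in> S"
        have "u \<in> V" using u ind by (auto simp: indep_def)
        moreover have "(u,w) \<notin> D" for w
        proof
          assume "(u,w) \<in> D"
          hence "(u,w) \<in> D' \<or> (u,w) \<in> In" using D'(2) by (auto simp: f'_def)
          thus False using D'S InS u by auto
        qed
        ultimately show "u \<in> sinks V D" by (simp add: sinks_def)
      qed
      ultimately show "D \<in> ?A" by (simp add: AOs_def)
    qed
  qed
  thus ?thesis by (rule bij_betw_same_card)
qed

lemma NONINDEP:
  assumes G: "simple_graph V E" and S: "S \<subseteq> V" and ni: "\<not> indep V E S"
  shows "{D\<in>AOs E. S \<subseteq> sinks V D} = {}"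
proof -
  obtain e where e: "e \<in> E" "e \<subseteq> S" using S ni by (auto simp: indep_def)
  have "card e = 2" using G e by (auto simp: simple_graph_def)
  then obtain u v where uv: "e = {u,v}" by (auto simp: card_2_iff)
  show ?thesis
  proof (rule ccontr)
    assume "{D\<in>AOs E. S \<subseteq> sinks V D} \<noteq> {}"
    then obtain D where D: "orientation E D" "S \<subseteq> sinks V D" by (auto simp: AOs_def)
    have "(u,v) \<in> D \<or> (v,u) \<in> D" using D(1) e uv by (auto simp: orientation_def)
    thus False using D(2) e uv by (auto simp: sinks_def)
  qed
qed

lemma sink_exists:
  assumes G: "simple_graph V E" and V: "V \<noteq> {}" and D: "D \<in> AOs E"
  shows "sinks V D \<noteq> {}"
proof -
  have o: "orientation E D" and ac: "acyclic D" using D by (auto simp: AOs_def)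
  have sub: "D \<subseteq> V \<times> V" using orient_sub[OF o G] .
  have "finite D" using sub G by (meson finite_SigmaI finite_subset simple_graph_def)
  hence "wf (D\<inverse>)" using ac by (rule finite_acyclic_wf_converse)
  then obtain z where z: "z \<in> V" "\<forall>y. (y, z) \<in> D\<inverse> \<longrightarrow> y \<notin> V"
    using V unfolding wf_eq_minimal by blast
  have "z \<in> sinks V D" using z sub by (auto simp: sinks_def)
  thus ?thesis by auto
qed

lemma pow_sum: "finite K \<Longrightarrow> (\<Sum>U\<in>Pow K. s ^ card U) = (s + 1) ^ card K" for s :: "'a::comm_semiring_1"
proof -
  assume K: "finite K"
  have "(s + 1) ^ card K = (\<Prod>x\<in>K. s + 1)" by simp
  also have "\<dots> = (\<Sum>U\<in>Pow K. (\<Prod>x\<in>U. s) * (\<Prod>x\<in>K - U. 1))" by (rule prod_add[OF K])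
  also have "\<dots> = (\<Sum>U\<in>Pow K. s ^ card U)" by simp
  finally show ?thesis by simp
qed

lemma sum_of_bool_card:
  assumes "finite A"
  shows "(\<Sum>x\<in>A. (of_bool (P x) :: 'a::comm_semiring_1)) = of_nat (card {x\<in>A. P x})"
  using sum_of_bool_filter[OF assms, of P "\<lambda>_. 1::'a"] by simp

lemma SWAP:
  fixes h :: "_ \<Rightarrow> 'b::comm_semiring_1"
  assumes G: "simple_graph V E"
  shows "(\<Sum>D\<in>AOs E. \<Sum>U\<in>Pow (sinks V D). h U) =
         (\<Sum>U\<in>{U\<in>Pow V. indep V E U}. h U * of_nat (card (AOs (Em E U))))"
    (is "?L = ?R")
proof -
  have finV: "finite V" using G by (simp add: simple_graph_def)
  have fA: "finite (AOs E)" using finite_AOs[OF G] .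
  have "?L = (\<Sum>D\<in>AOs E. \<Sum>U\<in>Pow V. of_bool (U \<subseteq> sinks V D) * h U)"
  proof (rule sum.cong[OF refl])
    fix D
    have "sinks V D \<subseteq> V" by (auto simp: sinks_def)
    hence "{U\<in>Pow V. U \<subseteq> sinks V D} = Pow (sinks V D)" by auto
    thus "(\<Sum>U\<in>Pow (sinks V D). h U) = (\<Sum>U\<in>Pow V. of_bool (U \<subseteq> sinks V D) * h U)"
      using sum_of_bool_filter[of "Pow V" "\<lambda>U. U \<subseteq> sinks V D" h] finV by simp
  qed
  also have "\<dots> = (\<Sum>U\<in>Pow V. h U * of_nat (card {D\<in>AOs E. U \<subseteq> sinks V D}))"
    by (subst sum.swap) (simp add: sum_distrib_left[symmetric] sum_of_bool_card[OF fA] mult.commute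
        flip: sum_distrib_right)
  also have "\<dots> = (\<Sum>U\<in>Pow V. of_bool (indep V E U) * (h U * of_nat (card (AOs (Em E U)))))"
  proof (rule sum.cong[OF refl])
    fix U assume "U \<in> Pow V"
    show "h U * of_nat (card {D\<in>AOs E. U \<subseteq> sinks V D}) =
          of_bool (indep V E U) * (h U * of_nat (card (AOs (Em E U))))"
    proof (cases "indep V E U")
      case True thus ?thesis using BIJ[OF G True] by simp
    next
      case False
      hence "{D\<in>AOs E. U \<subseteq> sinks V D} = {}" using NONINDEP[OF G] \<open>U \<in> Pow V\<close> by blast
      hence c: "card {D\<in>AOs E. U \<subseteq> sinks V D} = 0" by (metis card.empty)
      show ?thesis using False by (simp only: c) simp
    qed
  qed
  also have "\<dots> = ?R" using finV by (simp add: sum_of_bool_filter Int_def)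
  finally show ?thesis .
qed


lemma SINKIE:
  assumes G: "simple_graph V E" and V: "V \<noteq> {}"
  shows "(of_nat (card (AOs E)) :: rat) =
    (\<Sum>U\<in>{U\<in>Pow V. indep V E U}. (if U = {} then 0 else (-1) ^ (card U + 1)) * of_nat (card (AOs (Em E U))))"
proof -
  let ?h = "\<lambda>U. if U = {} then 0 else (-1::rat) ^ (card U + 1)"
  have one: "(\<Sum>U\<in>Pow (sinks V D). ?h U) = 1" if D: "D \<in> AOs E" for D
  proof -
    let ?K = "sinks V D"
    have fK: "finite ?K" using G by (auto simp: sinks_def simple_graph_def)
    have ne: "?K \<noteq> {}" using sink_exists[OF G V D] .
    have h: "?h U = of_bool (U = {}) - (-1) ^ card U" for U by auto
    have "(\<Sum>U\<in>Pow ?K. ?h U) = (\<Sum>U\<in>Pow ?K. of_bool (U = {})) - (\<Sum>U\<in>Pow ?K. (-1::rat) ^ card U)"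
      by (simp only: h sum_subtractf)
    also have "(\<Sum>U\<in>Pow ?K. (of_bool (U = {}) :: rat)) = 1"
      using fK by (simp add: sum_of_bool_card)
    also have "(\<Sum>U\<in>Pow ?K. (-1::rat) ^ card U) = 0"
      using pow_sum[OF fK, of "-1::rat"] fK ne by (simp add: card_gt_0_iff)
    finally show ?thesis by simp
  qed
  have "(of_nat (card (AOs E)) :: rat) = (\<Sum>D\<in>AOs E. \<Sum>U\<in>Pow (sinks V D). ?h U)"
    by (simp add: one)
  also have "\<dots> = (\<Sum>U\<in>{U\<in>Pow V. indep V E U}. ?h U * of_nat (card (AOs (Em E U))))"
    by (rule SWAP[OF G])
  finally show ?thesis .
qed

lemma R2:
  assumes G: "simple_graph V E"
  shows "(\<Sum>D\<in>AOs E. (t::rat) ^ card (sinks V D)) =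
    (\<Sum>U\<in>{U\<in>Pow V. indep V E U}. (t - 1) ^ card U * of_nat (card (AOs (Em E U))))"
proof -
  have "(\<Sum>U\<in>Pow (sinks V D). (t - 1) ^ card U) = t ^ card (sinks V D)" for D
  proof -
    have fK: "finite (sinks V D)" using G by (auto simp: sinks_def simple_graph_def)
    show ?thesis using pow_sum[OF fK, of "t - 1"] by simp
  qed
  hence "(\<Sum>D\<in>AOs E. t ^ card (sinks V D)) = (\<Sum>D\<in>AOs E. \<Sum>U\<in>Pow (sinks V D). (t - 1) ^ card U)"
    by simp
  also have "\<dots> = (\<Sum>U\<in>{U\<in>Pow V. indep V E U}. (t - 1) ^ card U * of_nat (card (AOs (Em E U))))"
    by (rule SWAP[OF G])
  finally show ?thesis .
qed

definition join :: "'v set \<Rightarrow> 'v set \<Rightarrow> ('v \<Rightarrow> nat) \<Rightarrow> 'v \<Rightarrow> nat" where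
  "join V S \<kappa> = (\<lambda>v\<in>V. if v \<in> S then 1 else Suc (\<kappa> v))"

lemma DEC_bij:
  assumes G: "simple_graph V E"
  shows "bij_betw (\<lambda>(S, \<kappa>). join V S \<kappa>)
           (Sigma {S\<in>Pow V. indep V E S} (\<lambda>S. PCol N (V - S) (Em E S))) (PCol (Suc N) V E)"
proof (rule bij_betw_byWitness[where f'="\<lambda>\<kappa>. ({v\<in>V. \<kappa> v = 1}, \<lambda>v\<in>V - {v\<in>V. \<kappa> v = 1}. \<kappa> v - 1)"])
  let ?I = "Sigma {S\<in>Pow V. indep V E S} (\<lambda>S. PCol N (V - S) (Em E S))"
  show "\<forall>x\<in>?I. (\<lambda>\<kappa>. ({v\<in>V. \<kappa> v = 1}, \<lambda>v\<in>V - {v\<in>V. \<kappa> v = 1}. \<kappa> v - 1)) ((\<lambda>(S, \<kappa>). join V S \<kappa>) x) = x"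
  proof
    fix x assume "x \<in> ?I"
    then obtain S \<kappa> where x: "x = (S, \<kappa>)" "S \<subseteq> V" "\<kappa> \<in> PCol N (V - S) (Em E S)" by auto
    have S: "{v\<in>V. join V S \<kappa> v = 1} = S" using x(2) x(3)
      by (force simp: join_def PCol_def Col_def PiE_def Pi_def)
    have "(\<lambda>v\<in>V - S. join V S \<kappa> v - 1) = \<kappa>"
      using x(3) by (auto simp: join_def PCol_def Col_def PiE_def extensional_def)
    thus "(\<lambda>\<kappa>. ({v\<in>V. \<kappa> v = 1}, \<lambda>v\<in>V - {v\<in>V. \<kappa> v = 1}. \<kappa> v - 1)) ((\<lambda>(S, \<kappa>). join V S \<kappa>) x) = x"
      using S x(1) by simp
  qed
  show "\<forall>\<kappa>\<in>PCol (Suc N) V E. (\<lambda>(S, \<kappa>). join V S \<kappa>) ((\<lambda>\<kappa>. ({v\<in>V. \<kappa> v = 1}, \<lambda>v\<in>V - {v\<in>V. \<kappa> v = 1}. \<kappa> v - 1)) \<kappa>) = \<kappa>"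
  proof
    fix \<kappa> assume k: "\<kappa> \<in> PCol (Suc N) V E"
    show "(\<lambda>(S, \<kappa>). join V S \<kappa>) ((\<lambda>\<kappa>. ({v\<in>V. \<kappa> v = 1}, \<lambda>v\<in>V - {v\<in>V. \<kappa> v = 1}. \<kappa> v - 1)) \<kappa>) = \<kappa>"
    proof
      fix v show "(\<lambda>(S, \<kappa>). join V S \<kappa>) ((\<lambda>\<kappa>. ({v\<in>V. \<kappa> v = 1}, \<lambda>v\<in>V - {v\<in>V. \<kappa> v = 1}. \<kappa> v - 1)) \<kappa>) v = \<kappa> v"
        using k by (auto simp: join_def PCol_def Col_def PiE_def extensional_def Pi_def)
    qed
  qed
  show "(\<lambda>(S, \<kappa>). join V S \<kappa>) ` ?I \<subseteq> PCol (Suc N) V E"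
  proof
    fix \<kappa>0 assume "\<kappa>0 \<in> (\<lambda>(S, \<kappa>). join V S \<kappa>) ` ?I"
    then obtain S \<kappa> where x: "\<kappa>0 = join V S \<kappa>" "S \<subseteq> V" "indep V E S" "\<kappa> \<in> PCol N (V - S) (Em E S)" by auto
    have col: "\<kappa>0 \<in> Col (Suc N) V"
      using x by (auto simp: join_def Col_def PCol_def)
    have "proper E \<kappa>0" unfolding proper_def
    proof (intro allI impI)
      fix u v assume e: "{u, v} \<in> E"
      have uv: "u \<in> V" "v \<in> V" "u \<noteq> v" using sg_edge[OF G e] by auto
      have "\<not> (u \<in> S \<and> v \<in> S)" using x(3) e by (auto simp: indep_def)
      moreover have "\<kappa> u \<noteq> \<kappa> v" if "u \<notin> S" "v \<notin> S"
      proof -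
        have "{u,v} \<in> Em E S" using e that by (auto simp: Em_def)
        thus ?thesis using x(4) by (auto simp: PCol_def proper_def)
      qed
      moreover have "u \<notin> S \<Longrightarrow> 0 < \<kappa> u" "v \<notin> S \<Longrightarrow> 0 < \<kappa> v"
        using x(4) uv by (auto simp: PCol_def Col_def PiE_def Pi_def)
      ultimately show "\<kappa>0 u \<noteq> \<kappa>0 v" using uv x(1) by (auto simp: join_def)
    qed
    thus "\<kappa>0 \<in> PCol (Suc N) V E" using col by (simp add: PCol_def)
  qed
  show "(\<lambda>\<kappa>. ({v\<in>V. \<kappa> v = 1}, \<lambda>v\<in>V - {v\<in>V. \<kappa> v = 1}. \<kappa> v - 1)) ` PCol (Suc N) V E \<subseteq> ?I"
  proof
    fix x assume "x \<in> (\<lambda>\<kappa>. ({v\<in>V. \<kappa> v = 1}, \<lambda>v\<in>V - {v\<in>V. \<kappa> v = 1}. \<kappa> v - 1)) ` PCol (Suc N) V E"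
    then obtain \<kappa> where k: "\<kappa> \<in> PCol (Suc N) V E" and x: "x = ({v\<in>V. \<kappa> v = 1}, \<lambda>v\<in>V - {v\<in>V. \<kappa> v = 1}. \<kappa> v - 1)"
      by auto
    let ?S = "{v\<in>V. \<kappa> v = 1}"
    have kv: "\<kappa> v \<in> {1..Suc N}" if "v \<in> V" for v using k that by (auto simp: PCol_def Col_def)
    have pr: "\<kappa> u \<noteq> \<kappa> v" if "{u,v} \<in> E" for u v using k that by (auto simp: PCol_def proper_def)
    have ind: "indep V E ?S" unfolding indep_def
    proof (intro conjI ballI notI)
      fix e assume e: "e \<in> E" "e \<subseteq> ?S"
      have "card e = 2" using G e by (auto simp: simple_graph_def)
      then obtain u v where uv: "e = {u,v}" by (auto simp: card_2_iff)
      thus False using pr[of u v] e by auto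
    qed auto
    have "(\<lambda>v\<in>V - ?S. \<kappa> v - 1) \<in> PCol N (V - ?S) (Em E ?S)"
      unfolding PCol_def Col_def proper_def
    proof (intro CollectI conjI allI impI)
      show "(\<lambda>v\<in>V - ?S. \<kappa> v - 1) \<in> V - ?S \<rightarrow>\<^sub>E {1..N}"
        using kv by (force simp: PiE_def Pi_def)
    next
      fix u v assume e: "{u,v} \<in> Em E ?S"
      hence e': "{u,v} \<in> E" "u \<notin> ?S" "v \<notin> ?S" by (auto simp: Em_def)
      have uv: "u \<in> V" "v \<in> V" using sg_edge[OF G e'(1)] by auto
      show "(\<lambda>v\<in>V - ?S. \<kappa> v - 1) u \<noteq> (\<lambda>v\<in>V - ?S. \<kappa> v - 1) v"
        using pr[OF e'(1)] e' uv kv[of u] kv[of v] by auto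
    qed
    thus "x \<in> ?I" using ind x by (auto simp: indep_def)
  qed
qed

lemma DEC:
  assumes G: "simple_graph V E"
  shows "(\<Sum>\<kappa>\<in>PCol (Suc N) V E. w \<kappa>) =
    (\<Sum>S\<in>{S\<in>Pow V. indep V E S}. \<Sum>\<kappa>\<in>PCol N (V - S) (Em E S). w (join V S \<kappa>))"
proof -
  have finV: "finite V" using G by (simp add: simple_graph_def)
  have "(\<Sum>\<kappa>\<in>PCol (Suc N) V E. w \<kappa>) =
      (\<Sum>x\<in>Sigma {S\<in>Pow V. indep V E S} (\<lambda>S. PCol N (V - S) (Em E S)). w ((\<lambda>(S, \<kappa>). join V S \<kappa>) x))"
    using sum.reindex_bij_betw[OF DEC_bij[OF G], of w] by simp
  also have "\<dots> = (\<Sum>S\<in>{S\<in>Pow V. indep V E S}. \<Sum>\<kappa>\<in>PCol N (V - S) (Em E S). w (join V S \<kappa>))"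
    by (subst sum.Sigma) (auto simp: finV finite_PCol split_def)
  finally show ?thesis .
qed


lemma ev_agree:
  assumes eq: "\<forall>\<alpha>. Poly_Mapping.keys \<alpha> \<subseteq> {..N} \<longrightarrow> Poly_Mapping.lookup F \<alpha> = Poly_Mapping.lookup H \<alpha>"
    and a: "\<forall>i. N < i \<longrightarrow> a i = 0"
  shows "ev a F = ev a H"
proof -
  let ?K = "Poly_Mapping.keys F \<union> Poly_Mapping.keys H"
  have "ev a F = (\<Sum>\<alpha>\<in>?K. Poly_Mapping.lookup F \<alpha> * mv a \<alpha>)" by (rule ev_superset) auto
  also have "\<dots> = (\<Sum>\<alpha>\<in>?K. Poly_Mapping.lookup H \<alpha> * mv a \<alpha>)"
  proof (rule sum.cong[OF refl])
    fix \<alpha> :: "nat \<Rightarrow>\<^sub>0 nat"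
    show "Poly_Mapping.lookup F \<alpha> * mv a \<alpha> = Poly_Mapping.lookup H \<alpha> * mv a \<alpha>"
    proof (cases "Poly_Mapping.keys \<alpha> \<subseteq> {..N}")
      case True thus ?thesis using eq by simp
    next
      case False
      then obtain i where i: "i \<in> Poly_Mapping.keys \<alpha>" "N < i" by (meson atMost_iff not_le subsetI)
      have "mv a \<alpha> = 0" unfolding mv_def
        by (rule prod_zero) (use i a in \<open>auto simp: in_keys_iff\<close>)
      thus ?thesis by simp
    qed
  qed
  also have "\<dots> = ev a H" by (rule ev_superset[symmetric]) auto
  finally show ?thesis .
qed

lemma ev_zt: "ev a (zt N n) = (\<Sum>i\<in>{1..N}. (1 + a i) ^ n - 1)"
  by (simp add: zt_def ev_sum ev_diff ev_power ev_add)

lemma EVI: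
  assumes G: "simple_graph V E" and eq: "zeta_eval c = chromatic_sym V E"
    and a: "\<forall>i. i \<notin> {1..N} \<longrightarrow> a i = 0"
  shows "(\<Sum>\<kappa>\<in>PCol N V E. \<Prod>v\<in>V. a (\<kappa> v)) =
    (\<Sum>lam\<in>{lam. c lam \<noteq> 0}. c lam * prod_mset (image_mset (\<lambda>n. \<Sum>i\<in>{1..N}. (1 + a i) ^ n - 1) lam))"
proof -
  let ?H = "\<Sum>lam\<in>{lam. c lam \<noteq> 0}. Poly_Mapping.single 0 (c lam) * Zm N lam"
  have finV: "finite V" using G by (simp add: simple_graph_def)
  have "\<forall>\<alpha>. Poly_Mapping.keys \<alpha> \<subseteq> {..N} \<longrightarrow> Poly_Mapping.lookup (Xt V E N) \<alpha> = Poly_Mapping.lookup ?H \<alpha>"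
    using agree_Xt[OF finV, of N E] agree_zeta_eval[of N c] eq by (simp add: agree_def)
  moreover have "\<forall>i. N < i \<longrightarrow> a i = 0" using a by auto
  ultimately have "ev a (Xt V E N) = ev a ?H" by (rule ev_agree)
  moreover have "ev a (Xt V E N) = (\<Sum>\<kappa>\<in>PCol N V E. \<Prod>v\<in>V. a (\<kappa> v))"
    by (simp add: Xt_def ev_sum ev_prod)
  moreover have "ev a ?H = (\<Sum>lam\<in>{lam. c lam \<noteq> 0}. c lam * prod_mset (image_mset (\<lambda>n. \<Sum>i\<in>{1..N}. (1 + a i) ^ n - 1) lam))"
    by (simp add: ev_sum ev_mult Zm_def ev_prod_mset ev_zt)
  ultimately show ?thesis by simp
qed

definition chrompoly :: "'v set \<Rightarrow> 'v set set \<Rightarrow> rat poly" where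
  "chrompoly V E = (\<Sum>lam\<in>{lam. cG V E lam \<noteq> 0}.
      smult (cG V E lam) (prod_mset (image_mset (\<lambda>n. [:0, 2 ^ n - 1:]) lam)))"

lemma poly_prod_mset_img:
  "poly (prod_mset (image_mset f M)) x = prod_mset (image_mset (\<lambda>n. poly (f n) x) M)"
  by (induction M) auto

lemma chrompoly:
  assumes G: "simple_graph V E"
  shows "poly (chrompoly V E) (of_nat N) = of_nat (card (PCol N V E))"
proof -
  define a where "a i = (if i \<in> {1..N} then 1 else (0::rat))" for i
  have "(\<Sum>\<kappa>\<in>PCol N V E. \<Prod>v\<in>V. a (\<kappa> v)) = (\<Sum>\<kappa>\<in>PCol N V E. 1)"
    by (intro sum.cong refl prod.neutral) (auto simp: a_def PCol_def Col_def)
  also have "\<dots> = of_nat (card (PCol N V E))" by simp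
  finally have L: "(\<Sum>\<kappa>\<in>PCol N V E. \<Prod>v\<in>V. a (\<kappa> v)) = of_nat (card (PCol N V E))" .
  have inner: "(\<lambda>n. \<Sum>i\<in>{1..N}. (1 + a i) ^ n - 1) = (\<lambda>n. poly [:0, 2 ^ n - 1:] (of_nat N))"
    by (rule ext) (simp add: a_def)
  have "(\<Sum>\<kappa>\<in>PCol N V E. \<Prod>v\<in>V. a (\<kappa> v)) =
    (\<Sum>lam\<in>{lam. cG V E lam \<noteq> 0}. cG V E lam * prod_mset (image_mset (\<lambda>n. \<Sum>i\<in>{1..N}. (1 + a i) ^ n - 1) lam))"
    by (rule EVI[OF G existence[OF G]]) (auto simp: a_def)
  also have "\<dots> = poly (chrompoly V E) (of_nat N)"
    unfolding inner by (simp add: chrompoly_def poly_sum poly_prod_mset_img)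
  finally show ?thesis using L by simp
qed

lemma poly_eq_nat:
  fixes p q :: "rat poly"
  assumes "\<And>n::nat. poly p (of_nat n) = poly q (of_nat n)"
  shows "p = q"
proof (rule ccontr)
  assume "p \<noteq> q"
  hence "p - q \<noteq> 0" by simp
  hence "finite {x. poly (p - q) x = 0}" by (rule poly_roots_finite)
  moreover have "range (of_nat :: nat \<Rightarrow> rat) \<subseteq> {x. poly (p - q) x = 0}" using assms by auto
  moreover have "infinite (range (of_nat :: nat \<Rightarrow> rat))"
    using range_inj_infinite[of "of_nat :: nat \<Rightarrow> rat"] by (simp add: inj_on_def)
  ultimately show False using finite_subset by blast
qed

lemma PCol0:
  assumes G: "simple_graph V E"
  shows "card (PCol 0 V E) = (if V = {} then 1 else 0)"
proof (cases "V = {}")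
  case True
  hence "E = {}" using G by (auto simp: simple_graph_def)
  thus ?thesis using True by (simp add: PCol_def Col_def proper_def)
next
  case False
  hence "Col 0 V = {}" by (auto simp: Col_def PiE_eq_empty_iff)
  thus ?thesis using False by (simp add: PCol_def)
qed

lemma sign_lemma: "k \<le> n \<Longrightarrow> (-1::rat) ^ n * (-1) ^ (k + 1) = - ((-1) ^ (n - k))"
proof -
  assume "k \<le> n"
  then obtain m where n: "n = k + m" by (metis le_add_diff_inverse)
  have "(-1::rat) ^ k * (-1) ^ k = 1" by (simp flip: power_mult_distrib)
  hence "(-1::rat) ^ (k + m) * (-1) ^ (k + 1) = - ((-1) ^ m)"
    by (simp add: power_add algebra_simps)
  thus ?thesis using n by simp
qed

lemma Em_empty: "Em E {} = E" by (simp add: Em_def)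

lemma indep_empty: "simple_graph V E \<Longrightarrow> indep V E {}"
  unfolding indep_def simple_graph_def by force

lemma R1:
  fixes q :: "rat poly"
  assumes "simple_graph V E" "\<forall>N. poly q (of_nat N) = of_nat (card (PCol N V E))"
  shows "poly q (-1) = (-1) ^ card V * of_nat (card (AOs E))"
  using assms
proof (induction "card V" arbitrary: V E q rule: less_induct)
  case less
  note G = less.prems(1) and qN = less.prems(2)
  have finV: "finite V" using G by (simp add: simple_graph_def)
  define IS where "IS = {S\<in>Pow V. indep V E S}"
  have fIS: "finite IS" using finV by (simp add: IS_def)
  have e0: "{} \<in> IS" using indep_empty[OF G] by (simp add: IS_def)
  define QS where "QS S = (if S = {} then q else chrompoly (V - S) (Em E S))" for S
  have QSe: "poly (QS S) (of_nat N) = of_nat (card (PCol N (V - S) (Em E S)))" if "S \<in> IS" for S N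
  proof (cases "S = {}")
    case True thus ?thesis using qN by (simp add: QS_def Em_empty)
  next
    case False
    have "simple_graph (V - S) (Em E S)" using sg_Em[OF G] that by (auto simp: IS_def)
    thus ?thesis using False chrompoly by (simp add: QS_def)
  qed
  have "pcompose q [:1, 1:] = (\<Sum>S\<in>IS. QS S)"
  proof (rule poly_eq_nat)
    fix N :: nat
    have "poly (pcompose q [:1, 1:]) (of_nat N) = poly q (of_nat (Suc N))"
      by (simp add: poly_pcompose add.commute)
    also have "\<dots> = of_nat (card (PCol (Suc N) V E))" using qN[rule_format, of "Suc N"] by simp
    also have "card (PCol (Suc N) V E) = (\<Sum>S\<in>IS. card (PCol N (V - S) (Em E S)))"
      using DEC[OF G, where N=N and w="\<lambda>_. 1::nat"] by (simp add: IS_def)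
    also have "of_nat \<dots> = (\<Sum>S\<in>IS. poly (QS S) (of_nat N))"
      by (simp add: QSe)
    finally show "poly (pcompose q [:1, 1:]) (of_nat N) = poly (\<Sum>S\<in>IS. QS S) (of_nat N)"
      by (simp add: poly_sum)
  qed
  hence "poly (pcompose q [:1, 1:]) (-1) = poly (\<Sum>S\<in>IS. QS S) (-1)" by simp
  hence "poly q 0 = (\<Sum>S\<in>IS. poly (QS S) (-1))" by (simp add: poly_pcompose poly_sum)
  also have "\<dots> = poly q (-1) + (\<Sum>S\<in>IS - {{}}. poly (QS S) (-1))"
    using sum.remove[OF fIS e0, of "\<lambda>S. poly (QS S) (-1)"] by (simp add: QS_def[of "{}"])
  also have "(\<Sum>S\<in>IS - {{}}. poly (QS S) (-1)) =
      (\<Sum>S\<in>IS - {{}}. (-1) ^ card (V - S) * of_nat (card (AOs (Em E S))))"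
  proof (rule sum.cong[OF refl])
    fix S assume S: "S \<in> IS - {{}}"
    hence SV: "S \<subseteq> V" "S \<noteq> {}" by (auto simp: IS_def)
    have lt: "card (V - S) < card V" using SV finV
      by (metis Diff_subset card_seteq finite_Diff Diff_disjoint Int_absorb2 psubsetI subset_antisym psubset_card_mono)
    have sg: "simple_graph (V - S) (Em E S)" using sg_Em[OF G SV(1)] .
    show "poly (QS S) (-1) = (-1) ^ card (V - S) * of_nat (card (AOs (Em E S)))"
      using less.hyps[OF lt sg] QSe S by blast
  qed
  finally have main: "poly q 0 = poly q (-1) + (\<Sum>S\<in>IS - {{}}. (-1) ^ card (V - S) * of_nat (card (AOs (Em E S))))" .
  have q0: "poly q 0 = (if V = {} then 1 else 0)" using qN[rule_format, of 0] PCol0[OF G] by simp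
  show ?case
  proof (cases "V = {}")
    case True
    hence e: "IS - {{}} = {}" by (auto simp: IS_def)
    have "E = {}" using G True by (auto simp: simple_graph_def)
    hence A: "AOs E = {{}}" by (auto simp: AOs_def orientation_def acyclic_def)
    have "card (AOs E) = 1" by (simp add: A)
    moreover have "poly q (-1) = 1" using main q0 True by (simp only: e sum.empty) simp
    ultimately show ?thesis using True by simp
  next
    case False
    have "(of_nat (card (AOs E)) :: rat) =
      (\<Sum>U\<in>IS. (if U = {} then 0 else (-1) ^ (card U + 1)) * of_nat (card (AOs (Em E U))))"
      using SINKIE[OF G False] by (simp add: IS_def)
    also have "\<dots> = (\<Sum>U\<in>IS - {{}}. (-1) ^ (card U + 1) * of_nat (card (AOs (Em E U))))"
    proof -
      let ?F = "\<lambda>U. (if U = {} then 0 else (-1::rat) ^ (card U + 1)) * of_nat (card (AOs (Em E U)))"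
      have "sum ?F IS = ?F {} + sum ?F (IS - {{}})" by (rule sum.remove[OF fIS e0])
      moreover have "?F {} = 0" by simp
      moreover have "sum ?F (IS - {{}}) = (\<Sum>U\<in>IS - {{}}. (-1) ^ (card U + 1) * of_nat (card (AOs (Em E U))))"
        by (rule sum.cong) auto
      ultimately show ?thesis by (simp only: add_0_left)
    qed
    finally have "(-1) ^ card V * (of_nat (card (AOs E)) :: rat) =
      (\<Sum>U\<in>IS - {{}}. ((-1) ^ card V * (-1) ^ (card U + 1)) * of_nat (card (AOs (Em E U))))"
      by (simp add: sum_distrib_left mult.assoc)
    also have "\<dots> = (\<Sum>U\<in>IS - {{}}. - ((-1) ^ card (V - U) * of_nat (card (AOs (Em E U)))))"
    proof (rule sum.cong[OF refl])
      fix U assume "U \<in> IS - {{}}"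
      hence UV: "U \<subseteq> V" by (auto simp: IS_def)
      hence "card U \<le> card V" and "card (V - U) = card V - card U" using finV
        by (auto simp: card_mono card_Diff_subset finite_subset)
      show "((-1) ^ card V * (-1) ^ (card U + 1)) * (of_nat (card (AOs (Em E U))) :: rat) =
            - ((-1) ^ card (V - U) * of_nat (card (AOs (Em E U))))"
      proof -
        have "(-1::rat) ^ card V * (-1) ^ (card U + 1) = - ((-1) ^ (card V - card U))"
          by (rule sign_lemma) fact
        thus ?thesis using \<open>card (V - U) = card V - card U\<close> by simp
      qed
    qed
    finally show ?thesis using main q0 False by (simp add: sum_negf)
  qed
qed


lemma prod_mset_pow: "prod_mset (image_mset (\<lambda>n. x ^ n) M) = (x::'a::comm_monoid_mult) ^ sum_mset M"
  by (induction M) (auto simp: power_add)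

lemma inner_sum:
  assumes n: "n \<ge> 1" and a1: "a 1 = s" and a2: "\<forall>i\<in>{2..Suc N}. a i = (-1::rat)"
  shows "(\<Sum>i\<in>{1..Suc N}. (1 + a i) ^ n - 1) = (1 + s) ^ n - 1 - of_nat N"
proof -
  have "{1..Suc N} = insert 1 {2..Suc N}" by auto
  hence "(\<Sum>i\<in>{1..Suc N}. (1 + a i) ^ n - 1) = ((1 + a 1) ^ n - 1) + (\<Sum>i\<in>{2..Suc N}. (1 + a i) ^ n - 1)"
    by simp
  also have "(\<Sum>i\<in>{2..Suc N}. (1 + a i) ^ n - 1) = (\<Sum>i\<in>{2..Suc N}. (-1::rat))"
    using a2 n by (intro sum.cong refl) (simp add: power_0_left)
  also have "\<dots> = - of_nat N" by simp
  finally show ?thesis using a1 by simp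
qed

lemma prod_join:
  assumes finV: "finite V" and S: "S \<subseteq> V" and k: "\<kappa> \<in> PCol N (V - S) E'"
    and a1: "a 1 = s" and a2: "\<forall>i\<in>{2..Suc N}. a i = (-1::rat)"
  shows "(\<Prod>v\<in>V. a (join V S \<kappa> v)) = s ^ card S * (-1) ^ card (V - S)"
proof -
  have "(\<Prod>v\<in>V. a (join V S \<kappa> v)) = (\<Prod>v\<in>V - S. a (join V S \<kappa> v)) * (\<Prod>v\<in>S. a (join V S \<kappa> v))"
    by (rule prod.subset_diff[OF S finV])
  also have "(\<Prod>v\<in>S. a (join V S \<kappa> v)) = (\<Prod>v\<in>S. s)"
    using S a1 by (intro prod.cong refl) (auto simp: join_def)
  also have "(\<Prod>v\<in>V - S. a (join V S \<kappa> v)) = (\<Prod>v\<in>V - S. -1)"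
  proof (intro prod.cong refl)
    fix v assume v: "v \<in> V - S"
    hence "\<kappa> v \<in> {1..N}" using k by (auto simp: PCol_def Col_def)
    thus "a (join V S \<kappa> v) = -1" using v a2 by (auto simp: join_def)
  qed
  finally show ?thesis by simp
qed

lemma main_identity:
  assumes G: "simple_graph V E" and c: "zeta_poly c" and eq: "zeta_eval c = chromatic_sym V E"
  shows "(\<Sum>D\<in>AOs E. t ^ card (sinks V D)) = (\<Sum>lam\<in>{lam. c lam \<noteq> 0}. c lam * t ^ sum_mset lam)"
proof -
  define s where "s = t - 1"
  have finV: "finite V" using G by (simp add: simple_graph_def)
  define IS where "IS = {S\<in>Pow V. indep V E S}"
  have sgS: "simple_graph (V - S) (Em E S)" if "S \<in> IS" for S
    using sg_Em[OF G] that by (auto simp: IS_def)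
  define PL where "PL = (\<Sum>S\<in>IS. smult (s ^ card S * (-1) ^ card (V - S)) (chrompoly (V - S) (Em E S)))"
  define PR where "PR = (\<Sum>lam\<in>{lam. c lam \<noteq> 0}. smult (c lam) (prod_mset (image_mset (\<lambda>n. [:(1 + s) ^ n - 1, -1:]) lam)))"
  have pos: "\<And>lam n. c lam \<noteq> 0 \<Longrightarrow> n \<in># lam \<Longrightarrow> n \<ge> 1"
    using c unfolding zeta_poly_def by (metis less_one not_le)
  have "PL = PR"
  proof (rule poly_eq_nat)
    fix N :: nat
    define a where "a i = (if i = 1 then s else if 2 \<le> i \<and> i \<le> Suc N then -1 else (0::rat))" for i
    have a1: "a 1 = s" and a2: "\<forall>i\<in>{2..Suc N}. a i = -1" by (auto simp: a_def)
    have "poly PL (of_nat N) = (\<Sum>S\<in>IS. (s ^ card S * (-1) ^ card (V - S)) * of_nat (card (PCol N (V - S) (Em E S))))"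
      by (simp add: PL_def poly_sum chrompoly sgS)
    also have "\<dots> = (\<Sum>S\<in>IS. \<Sum>\<kappa>\<in>PCol N (V - S) (Em E S). \<Prod>v\<in>V. a (join V S \<kappa> v))"
    proof (rule sum.cong[OF refl])
      fix S assume S: "S \<in> IS"
      have "(\<Sum>\<kappa>\<in>PCol N (V - S) (Em E S). \<Prod>v\<in>V. a (join V S \<kappa> v)) =
            (\<Sum>\<kappa>\<in>PCol N (V - S) (Em E S). s ^ card S * (-1) ^ card (V - S))"
        using S by (intro sum.cong refl prod_join[OF finV _ _ a1 a2]) (auto simp: IS_def)
      thus "(s ^ card S * (-1) ^ card (V - S)) * of_nat (card (PCol N (V - S) (Em E S))) =
            (\<Sum>\<kappa>\<in>PCol N (V - S) (Em E S). \<Prod>v\<in>V. a (join V S \<kappa> v))"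
        by (simp add: mult.commute)
    qed
    also have "\<dots> = (\<Sum>\<kappa>\<in>PCol (Suc N) V E. \<Prod>v\<in>V. a (\<kappa> v))"
      using DEC[OF G, where N=N and w="\<lambda>\<kappa>. \<Prod>v\<in>V. a (\<kappa> v)"] by (simp add: IS_def)
    also have "\<dots> = (\<Sum>lam\<in>{lam. c lam \<noteq> 0}. c lam * prod_mset (image_mset (\<lambda>n. \<Sum>i\<in>{1..Suc N}. (1 + a i) ^ n - 1) lam))"
      by (rule EVI[OF G eq]) (auto simp: a_def)
    also have "\<dots> = (\<Sum>lam\<in>{lam. c lam \<noteq> 0}. c lam * prod_mset (image_mset (\<lambda>n. poly [:(1 + s) ^ n - 1, -1:] (of_nat N)) lam))"
    proof (rule sum.cong[OF refl])
      fix lam assume "lam \<in> {lam. c lam \<noteq> 0}"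
      hence "\<And>n. n \<in># lam \<Longrightarrow> (\<Sum>i\<in>{1..Suc N}. (1 + a i) ^ n - 1) = poly [:(1 + s) ^ n - 1, -1:] (of_nat N)"
        using inner_sum[OF _ a1 a2] pos by simp
      hence "image_mset (\<lambda>n. \<Sum>i\<in>{1..Suc N}. (1 + a i) ^ n - 1) lam =
             image_mset (\<lambda>n. poly [:(1 + s) ^ n - 1, -1:] (of_nat N)) lam"
        by (rule image_mset_cong)
      thus "c lam * prod_mset (image_mset (\<lambda>n. \<Sum>i\<in>{1..Suc N}. (1 + a i) ^ n - 1) lam) =
            c lam * prod_mset (image_mset (\<lambda>n. poly [:(1 + s) ^ n - 1, -1:] (of_nat N)) lam)" by simp
    qed
    also have "\<dots> = poly PR (of_nat N)"
      by (simp add: PR_def poly_sum poly_prod_mset_img)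
    finally show "poly PL (of_nat N) = poly PR (of_nat N)" .
  qed
  hence "poly PL (-1) = poly PR (-1)" by simp
  moreover have "poly PL (-1) = (\<Sum>D\<in>AOs E. t ^ card (sinks V D))"
  proof -
    have "poly PL (-1) = (\<Sum>S\<in>IS. (s ^ card S * (-1) ^ card (V - S)) * ((-1) ^ card (V - S) * of_nat (card (AOs (Em E S)))))"
      unfolding PL_def poly_sum poly_smult
      by (intro sum.cong refl arg_cong2[where f="(*)"] R1 sgS) (auto simp: chrompoly sgS)
    also have "\<dots> = (\<Sum>S\<in>IS. (t - 1) ^ card S * of_nat (card (AOs (Em E S))))"
    proof (rule sum.cong[OF refl])
      fix S
      have "(-1::rat) ^ card (V - S) * (-1) ^ card (V - S) = 1" by (simp flip: power_mult_distrib)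
      thus "(s ^ card S * (-1) ^ card (V - S)) * ((-1) ^ card (V - S) * of_nat (card (AOs (Em E S)))) =
            (t - 1) ^ card S * of_nat (card (AOs (Em E S)))"
        by (simp add: s_def mult.assoc)
    qed
    also have "\<dots> = (\<Sum>D\<in>AOs E. t ^ card (sinks V D))"
      using R2[OF G, of t] by (simp add: IS_def)
    finally show ?thesis .
  qed
  moreover have "poly PR (-1) = (\<Sum>lam\<in>{lam. c lam \<noteq> 0}. c lam * t ^ sum_mset lam)"
    by (simp add: PR_def poly_sum poly_prod_mset_img s_def prod_mset_pow)
  ultimately show ?thesis by simp
qed

theorem theorem3p7:
  fixes V :: "'v set" and E :: "'v set set"
  assumes "simple_graph V E"
  shows "(\<exists>c. zeta_poly c \<and> zeta_eval c = chromatic_sym V E) \<and>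
         (\<forall>c. zeta_poly c \<and> zeta_eval c = chromatic_sym V E \<longrightarrow>
            (\<forall>k. of_nat (acyc_orient_sinks V E k) =
                 (\<Sum>lam\<in>{lam. c lam \<noteq> 0 \<and> sum_mset lam = k}. c lam)))"
proof
  show "\<exists>c. zeta_poly c \<and> zeta_eval c = chromatic_sym V E"
    using cG_poly[OF assms] existence[OF assms] by blast
  show "\<forall>c. zeta_poly c \<and> zeta_eval c = chromatic_sym V E \<longrightarrow>
            (\<forall>k. of_nat (acyc_orient_sinks V E k) =
                 (\<Sum>lam\<in>{lam. c lam \<noteq> 0 \<and> sum_mset lam = k}. c lam))"
  proof (intro allI impI)
    fix c k assume c: "zeta_poly c \<and> zeta_eval c = chromatic_sym V E"
    have fin: "finite {lam. c lam \<noteq> 0}" using c by (simp add: zeta_poly_def)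
    have fA: "finite (AOs E)" by (rule finite_AOs[OF assms])
    define A where "A = (\<Sum>D\<in>AOs E. monom (1::rat) (card (sinks V D)))"
    define B where "B = (\<Sum>lam\<in>{lam. c lam \<noteq> 0}. monom (c lam) (sum_mset lam))"
    have "A = B"
      by (rule poly_eq_nat) (simp add: A_def B_def poly_sum poly_monom main_identity[OF assms] c)
    hence "coeff A k = coeff B k" by simp
    moreover have "coeff A k = of_nat (acyc_orient_sinks V E k)"
    proof -
      have "coeff A k = (\<Sum>D\<in>AOs E. of_bool (card (sinks V D) = k))"
        by (simp add: A_def coeff_sum coeff_monom of_bool_def)
      also have "\<dots> = of_nat (card {D\<in>AOs E. card (sinks V D) = k})"
        by (rule sum_of_bool_card[OF fA])
      finally show ?thesis by (simp add: acyc_orient_sinks_def AOs_def)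
    qed
    moreover have "coeff B k = (\<Sum>lam\<in>{lam. c lam \<noteq> 0 \<and> sum_mset lam = k}. c lam)"
    proof -
      have "coeff B k = (\<Sum>lam\<in>{lam. c lam \<noteq> 0}. if sum_mset lam = k then c lam else 0)"
        by (simp add: B_def coeff_sum coeff_monom)
      also have "\<dots> = (\<Sum>lam\<in>{lam\<in>{lam. c lam \<noteq> 0}. sum_mset lam = k}. c lam)"
        by (rule sum.inter_filter[OF fin, symmetric])
      finally show ?thesis by simp
    qed
    ultimately show "of_nat (acyc_orient_sinks V E k) = (\<Sum>lam\<in>{lam. c lam \<noteq> 0 \<and> sum_mset lam = k}. c lam)"
      by simp
  qed
qed


end
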